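(* For every $f\in\mathbb Z[\mathbf t][\mathbf x]$, $$f(\mathbf x;\mathbf t)=\sum_{F}a_F\,\mathfrak P_F(\mathbf x;\mathbf t)\quad\text{(finite sum over indexed forests)},$$ where for each indexed forest $F$ and each factorization $F=\underline{i_1}\cdot\underline{i_2}\cdots\underline{i_k}$ into elementary forests, $$a_F=\mathrm{ev}_{A_0}\,E_{i_1,A_1}E_{i_2,A_2}\cdots E_{i_k,A_k}\,f,\qquad A_j=i_{j+1}\star i_{j+2}\star\cdots\star i_k\ (0\le j\le k),$$ with $A_k=\emptyset$ (for $F=\emptyset$, $a_\emptyset=f(\mathbf t;\mathbf t)$).
   Context: $\mathbf x=(x_1,x_2,\dots)$, $\mathbf t=(t_1,t_2,\dots)$. For a finite $A\subset\mathbb N$ let $\overline A_1<\overline A_2<\cdots$ enumerate $\mathbb N\setminus A$ and $t_{i,A}=t_{\overline A_i}$. Define $\mathrm{ev}_Af=f(t_{1,A},t_{2,A},\dots;\mathbf t)$, $R^-_{i,A}f=f(x_1,\dots,x_{i-1},t_{i,A},x_i,x_{i+1},\dots;\mathbf t)$, $R^+_{i,A}f=f(x_1,\dots,x_i,t_{i,A},x_{i+1},\dots;\mathbf t)$, $E_{i,A}f=(R^+_{i,A}f-R^-_{i,A}f)/(x_i-t_{i,A})$. For finite $A,B\subset\mathbb N$, $A\star B=\{\overline B_i:i\in A\}\cup B$; an integer $i$ is identified with $\{i\}$, and $i_{j+1}\star\cdots\star i_k$ is computed right-nested: $i_{j+1}\star(i_{j+2}\star(\cdots\star\{i_k\}))$.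 Indexed forests: sequences $F=(T_1,T_2,\dots)$ of binary plane trees (each node a leaf or an internal node with ordered left/right children), all but finitely many one-node trees; leaves identified with $\mathbb N$ left to right; $\emptyset$ has no internal nodes. $\rho_F(v)$: leaf reached from internal node $v$ going repeatedly to left children; terminal: both children leaves; $\mathrm{Qdes}(F)=\{\rho_F(v):v\text{ terminal}\}$; $F/i$ deletes the terminal node with $\rho_F(v)=i$ (replacing it and its leaves by one leaf, relabeling). Product: $F\cdot G$ is obtained by grafting, for each $i\in\mathbb N$, the $i$-th tree of $G$ onto the $i$-th leaf of $F$ (identifying that leaf with the root of that tree). The elementary forest $\underline i$ has a single internal node, whose children are the leaves $i$ and $i+1$. Every forest with $k$ internal nodes is a product of $k$ elementary forests. Double forest polynomials: with $R_i^\pm=R^\pm_{i,\emptyset}$, $E_i=E_{i,\emptyset}$, $\mathfrak P_F$ is the unique homogeneous family ($\deg x_i=\deg t_i=1$) with $\mathfrak P_F(\mathbf t;\mathbf t)=\delta_{F,\emptyset}$ and $E_i\mathfrak P_F=\mathfrak P_{F/i}(\mathbf x;\widehat{\mathbf t}_i)$ if $i\in\mathrm{Qdes}(F)$, else $0$, where $\widehat{\mathbf t}_i=(t_1,\dots,t_{i-1},t_{i+1},\dots)$. *)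

theory Defs
  imports Main "HOL-Library.Poly_Mapping" "HOL-Library.Infinite_Set"
begin

(* Conventions: everything is 0-based.  Variables x_0, x_1, ... and t_0, t_1, ...;
   leaves of forests are numbered 0, 1, 2, ...;  the paper's N = {1,2,...} is
   shifted to nat = {0,1,...}. *)

datatype var = X nat | T nat

type_synonym poly = "(var \<Rightarrow>\<^sub>0 nat) \<Rightarrow>\<^sub>0 int"

definition pvar :: "var \<Rightarrow> poly" where
  "pvar v = Poly_Mapping.single (Poly_Mapping.single v 1) 1"

definition pconst :: "int \<Rightarrow> poly" where
  "pconst c = Poly_Mapping.single 0 c"

definition subst :: "(var \<Rightarrow> poly) \<Rightarrow> poly \<Rightarrow> poly" where
  "subst \<sigma> f = (\<Sum>mon\<in>Poly_Mapping.keys f. pconst (Poly_Mapping.lookup f mon) *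
                    (\<Prod>v\<in>Poly_Mapping.keys (mon :: var \<Rightarrow>\<^sub>0 nat). \<sigma> v ^ Poly_Mapping.lookup mon v))"

definition mdeg :: "(var \<Rightarrow>\<^sub>0 nat) \<Rightarrow> nat" where
  "mdeg m = (\<Sum>v\<in>Poly_Mapping.keys m. Poly_Mapping.lookup m v)"

definition homogeneous :: "poly \<Rightarrow> bool" where
  "homogeneous f \<longleftrightarrow> (\<forall>m\<in>Poly_Mapping.keys f. \<forall>m'\<in>Poly_Mapping.keys f. mdeg m = mdeg m')"

definition cobar :: "nat set \<Rightarrow> nat \<Rightarrow> nat" where
  "cobar A i = enumerate (- A) i"

definition tA :: "nat \<Rightarrow> nat set \<Rightarrow> poly" where
  "tA i A = pvar (T (cobar A i))"

definition evA :: "nat set \<Rightarrow> poly \<Rightarrow> poly" where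
  "evA A f = subst (\<lambda>v. case v of X j \<Rightarrow> tA j A | T j \<Rightarrow> pvar (T j)) f"

definition Rminus :: "nat \<Rightarrow> nat set \<Rightarrow> poly \<Rightarrow> poly" where
  "Rminus i A f = subst (\<lambda>v. case v of
       X j \<Rightarrow> (if j < i then pvar (X j) else if j = i then tA i A else pvar (X (j - 1)))
     | T j \<Rightarrow> pvar (T j)) f"

definition Rplus :: "nat \<Rightarrow> nat set \<Rightarrow> poly \<Rightarrow> poly" where
  "Rplus i A f = subst (\<lambda>v. case v of
       X j \<Rightarrow> (if j \<le> i then pvar (X j) else if j = Suc i then tA i A else pvar (X (j - 1)))
     | T j \<Rightarrow> pvar (T j)) f"

definition EA :: "nat \<Rightarrow> nat set \<Rightarrow> poly \<Rightarrow> poly" where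
  "EA i A f = (THE g. (pvar (X i) - tA i A) * g = Rplus i A f - Rminus i A f)"

definition ev_tt :: "poly \<Rightarrow> poly" where
  "ev_tt f = subst (\<lambda>v. case v of X j \<Rightarrow> pvar (T j) | T j \<Rightarrow> pvar (T j)) f"

definition hat_t :: "nat \<Rightarrow> poly \<Rightarrow> poly" where
  "hat_t i f = subst (\<lambda>v. case v of X j \<Rightarrow> pvar (X j)
                                   | T j \<Rightarrow> pvar (T (if j < i then j else Suc j))) f"

definition star :: "nat set \<Rightarrow> nat set \<Rightarrow> nat set" where
  "star A B = cobar B ` A \<union> B"

fun star_list :: "nat list \<Rightarrow> nat set" where
  "star_list [] = {}"
| "star_list (i # is) = star {i} (star_list is)"

datatype tree = Leaf | Node tree tree

fun leaves :: "tree \<Rightarrow> nat" where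
  "leaves Leaf = 1"
| "leaves (Node l r) = leaves l + leaves r"

type_synonym forest = "nat \<Rightarrow> tree"

definition is_forest :: "forest \<Rightarrow> bool" where
  "is_forest F \<longleftrightarrow> finite {j. F j \<noteq> Leaf}"

definition off :: "forest \<Rightarrow> nat \<Rightarrow> nat" where
  "off F j = (\<Sum>k<j. leaves (F k))"

definition empty_forest :: forest where
  "empty_forest = (\<lambda>_. Leaf)"

text \<open>rho-values of terminal nodes of a tree whose leftmost leaf has index o\<close>
fun qd_tree :: "tree \<Rightarrow> nat \<Rightarrow> nat set" where
  "qd_tree Leaf ofs = {}"
| "qd_tree (Node l r) ofs =
     (if l = Leaf \<and> r = Leaf then {ofs} else {}) \<union> qd_tree l ofs \<union> qd_tree r (ofs + leaves l)"

definition Qdes :: "forest \<Rightarrow> nat set" where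
  "Qdes F = (\<Union>j. qd_tree (F j) (off F j))"

fun del_tree :: "tree \<Rightarrow> nat \<Rightarrow> nat \<Rightarrow> tree" where
  "del_tree Leaf ofs i = Leaf"
| "del_tree (Node l r) ofs i =
     (if l = Leaf \<and> r = Leaf \<and> ofs = i then Leaf
      else Node (del_tree l ofs i) (del_tree r (ofs + leaves l) i))"

definition fdel :: "forest \<Rightarrow> nat \<Rightarrow> forest" where
  "fdel F i = (\<lambda>j. del_tree (F j) (off F j) i)"

fun graft :: "tree \<Rightarrow> nat \<Rightarrow> forest \<Rightarrow> tree" where
  "graft Leaf ofs G = G ofs"
| "graft (Node l r) ofs G = Node (graft l ofs G) (graft r (ofs + leaves l) G)"

definition fmult :: "forest \<Rightarrow> forest \<Rightarrow> forest" where
  "fmult F G = (\<lambda>j. graft (F j) (off F j) G)"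

definition elem :: "nat \<Rightarrow> forest" where
  "elem i = (\<lambda>j. if j = i then Node Leaf Leaf else Leaf)"

fun fprod :: "nat list \<Rightarrow> forest" where
  "fprod [] = empty_forest"
| "fprod (i # is) = fmult (elem i) (fprod is)"

definition dfp_family :: "(forest \<Rightarrow> poly) \<Rightarrow> bool" where
  "dfp_family P \<longleftrightarrow>
     (\<forall>F. \<not> is_forest F \<longrightarrow> P F = 0) \<and>
     (\<forall>F. is_forest F \<longrightarrow> homogeneous (P F)) \<and>
     (\<forall>F. is_forest F \<longrightarrow> ev_tt (P F) = (if F = empty_forest then 1 else 0)) \<and>
     (\<forall>F i. is_forest F \<longrightarrow>
        EA i {} (P F) = (if i \<in> Qdes F then hat_t i (P (fdel F i)) else 0))"

definition dfp :: "forest \<Rightarrow> poly" where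
  "dfp = (THE P. dfp_family P)"

text \<open>E_{i_1,A_1} E_{i_2,A_2} ... E_{i_k,A_k} f with A_j = star_list (drop j is)\<close>
fun Eseq :: "nat list \<Rightarrow> poly \<Rightarrow> poly" where
  "Eseq [] f = f"
| "Eseq (i # is) f = EA i (star_list is) (Eseq is f)"

definition coef :: "poly \<Rightarrow> nat list \<Rightarrow> poly" where
  "coef f is = evA (star_list is) (Eseq is f)"

end

theory Submission
  imports Defs "HOL-Library.Multiset"
begin

fun vrk :: "var \<Rightarrow> nat" where
  "vrk (X n) = 2*n" | "vrk (T n) = 2*n+1"

lemma vrk_inj: "vrk a = vrk b \<Longrightarrow> a = b"
  by (cases a; cases b; auto; presburger)

instantiation var :: linorder
begin
definition less_eq_var :: "var \<Rightarrow> var \<Rightarrow> bool" where "less_eq_var a b = (vrk a \<le> vrk b)"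
definition less_var :: "var \<Rightarrow> var \<Rightarrow> bool" where "less_var a b = (vrk a < vrk b)"
instance
  by standard (auto simp: less_eq_var_def less_var_def intro: vrk_inj)
end

lemma "(a::poly) * b = 0 \<Longrightarrow> a = 0 \<or> b = 0" by simp

definition meval :: "(var \<Rightarrow> poly) \<Rightarrow> (var \<Rightarrow>\<^sub>0 nat) \<Rightarrow> poly" where
  "meval \<sigma> m = (\<Prod>v\<in>Poly_Mapping.keys m. \<sigma> v ^ Poly_Mapping.lookup m v)"

lemma pconst_mult: "pconst c * p = frag_cmul c p"
  unfolding pconst_def
  by (rule poly_mapping_eqI) (simp add: mult_map_scale_conv_mult[symmetric] map.rep_eq frag_cmul_def when_def)

lemma subst_frag: "subst \<sigma> f = frag_extend (meval \<sigma>) f"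
  unfolding subst_def frag_extend_def meval_def pconst_mult ..

lemma meval_superset: "finite S \<Longrightarrow> Poly_Mapping.keys m \<subseteq> S \<Longrightarrow>
   meval \<sigma> m = (\<Prod>v\<in>S. \<sigma> v ^ Poly_Mapping.lookup m v)"
  unfolding meval_def
  by (rule prod.mono_neutral_left) (auto simp: in_keys_iff)

lemma meval_add: "meval \<sigma> (a + b) = meval \<sigma> a * meval \<sigma> b"
proof -
  let ?S = "Poly_Mapping.keys a \<union> Poly_Mapping.keys b"
  have "meval \<sigma> (a + b) = (\<Prod>v\<in>?S. \<sigma> v ^ Poly_Mapping.lookup (a+b) v)"
    by (rule meval_superset) (auto simp: keys_add)
  also have "\<dots> = (\<Prod>v\<in>?S. \<sigma> v ^ Poly_Mapping.lookup a v) * (\<Prod>v\<in>?S. \<sigma> v ^ Poly_Mapping.lookup b v)"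
    by (simp add: lookup_add power_add prod.distrib)
  also have "\<dots> = meval \<sigma> a * meval \<sigma> b"
    by (simp add: meval_superset[of ?S])
  finally show ?thesis .
qed

lemma meval_zero[simp]: "meval \<sigma> 0 = 1" by (simp add: meval_def)

lemma subst_0[simp]: "subst \<sigma> 0 = 0" by (simp add: subst_frag)
lemma subst_add[simp]: "subst \<sigma> (f + g) = subst \<sigma> f + subst \<sigma> g" by (simp add: subst_frag frag_extend_add)
lemma subst_diff[simp]: "subst \<sigma> (f - g) = subst \<sigma> f - subst \<sigma> g" by (simp add: subst_frag frag_extend_diff)
lemma subst_uminus[simp]: "subst \<sigma> (- f) = - subst \<sigma> f" by (simp add: subst_frag frag_extend_minus)
lemma subst_sum[simp]: "finite I \<Longrightarrow> subst \<sigma> (\<Sum>i\<in>I. g i) = (\<Sum>i\<in>I. subst \<sigma> (g i))"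
  by (induction I rule: finite_induct) auto

lemma subst_single1: "subst \<sigma> (Poly_Mapping.single m 1) = meval \<sigma> m"
  by (simp add: subst_frag)

lemma subst_mult_single: "subst \<sigma> (Poly_Mapping.single a 1 * Poly_Mapping.single b 1) =
   subst \<sigma> (Poly_Mapping.single a 1) * subst \<sigma> (Poly_Mapping.single b 1)"
  by (simp add: mult_single subst_single1 meval_add)

lemma subst_mult[simp]: "subst \<sigma> (f * g) = subst \<sigma> f * subst \<sigma> g"
proof -
  have h: "subst \<sigma> (f * Poly_Mapping.single b 1) = subst \<sigma> f * subst \<sigma> (Poly_Mapping.single b 1)" for b
    using subset_UNIV[of "Poly_Mapping.keys f"]
    by (induction f rule: frag_induction) (auto simp: subst_mult_single left_diff_distrib)
  show ?thesis
    using subset_UNIV[of "Poly_Mapping.keys g"]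
    by (induction g rule: frag_induction) (auto simp: right_diff_distrib h)
qed

lemma subst_1[simp]: "subst \<sigma> 1 = 1"
proof -
  have "(1::poly) = Poly_Mapping.single 0 1" by (rule poly_mapping_eqI) (simp add: lookup_one lookup_single)
  then show ?thesis by (metis subst_single1 meval_zero)
qed

lemma subst_pconst[simp]: "subst \<sigma> (pconst c) = pconst c"
  by (simp add: pconst_def subst_def)

lemma subst_pvar[simp]: "subst \<sigma> (pvar v) = \<sigma> v"
  by (simp add: pvar_def subst_single1 meval_def)

lemma subst_power[simp]: "subst \<sigma> (f ^ n) = subst \<sigma> f ^ n"
  by (induction n) auto

lemma subst_prod[simp]: "finite I \<Longrightarrow> subst \<sigma> (\<Prod>i\<in>I. g i) = (\<Prod>i\<in>I. subst \<sigma> (g i))"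
  by (induction I rule: finite_induct) auto

lemma subst_meval: "subst \<sigma> (meval \<tau> m) = meval (\<lambda>v. subst \<sigma> (\<tau> v)) m"
  by (simp add: meval_def)

lemma subst_subst: "subst \<sigma> (subst \<tau> f) = subst (\<lambda>v. subst \<sigma> (\<tau> v)) f"
  using subset_UNIV
  by (induction f rule: frag_induction) (auto simp: subst_single1 subst_meval)


lemma single_sum_keys: "m = (\<Sum>v\<in>Poly_Mapping.keys m. Poly_Mapping.single v (Poly_Mapping.lookup m v))"
proof (rule poly_mapping_eqI)
  fix k
  show "Poly_Mapping.lookup m k = Poly_Mapping.lookup (\<Sum>v\<in>Poly_Mapping.keys m. Poly_Mapping.single v (Poly_Mapping.lookup m v)) k"
    by (auto simp: lookup_sum lookup_single when_def in_keys_iff)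
qed

lemma single_pow: "(Poly_Mapping.single (Poly_Mapping.single v 1) (1::int)) ^ k = Poly_Mapping.single (Poly_Mapping.single v k) 1"
  by (induction k) (auto simp: mult_single single_add[symmetric] add.commute)

lemma single_prod: "finite S \<Longrightarrow> (\<Prod>v\<in>S. Poly_Mapping.single (g v) (1::int)) = Poly_Mapping.single (\<Sum>v\<in>S. g v) 1"
  by (induction S rule: finite_induct) (auto simp: mult_single)

lemma meval_pvar: "meval pvar m = Poly_Mapping.single m 1"
proof -
  have "meval pvar m = (\<Prod>v\<in>Poly_Mapping.keys m. Poly_Mapping.single (Poly_Mapping.single v (Poly_Mapping.lookup m v)) (1::int))"
    unfolding meval_def pvar_def by (rule prod.cong[OF refl]) (rule single_pow)
  also have "\<dots> = Poly_Mapping.single m 1"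
    by (subst single_prod) (simp_all flip: single_sum_keys)
  finally show ?thesis .
qed

lemma subst_pvar_id[simp]: "subst pvar f = f"
proof -
  have "meval pvar = (\<lambda>m. frag_of m)" by (rule ext) (rule meval_pvar)
  then show ?thesis by (simp add: subst_frag flip: frag_expansion)
qed

definition vars :: "poly \<Rightarrow> var set" where
  "vars f = (\<Union>m\<in>Poly_Mapping.keys f. Poly_Mapping.keys m)"

lemma subst_cong_vars:
  assumes h: "\<And>v. v \<in> vars f \<Longrightarrow> \<sigma> v = \<tau> v" shows "subst \<sigma> f = subst \<tau> f"
  unfolding subst_frag
proof (rule frag_extend_eq)
  fix m assume m: "m \<in> Poly_Mapping.keys f"
  show "meval \<sigma> m = meval \<tau> m"
    unfolding meval_def by (rule prod.cong[OF refl]) (use h m in \<open>force simp: vars_def\<close>)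
qed

lemma subst_id_vars: "(\<And>v. v \<in> vars f \<Longrightarrow> \<sigma> v = pvar v) \<Longrightarrow> subst \<sigma> f = f"
  using subst_cong_vars[of f \<sigma> pvar] by simp

lemma dvd_prod_diff: "finite S \<Longrightarrow> (\<And>v. v \<in> S \<Longrightarrow> (d::'a::comm_ring_1) dvd (a v - b v)) \<Longrightarrow>
   d dvd ((\<Prod>v\<in>S. a v) - (\<Prod>v\<in>S. b v))"
proof (induction S rule: finite_induct)
  case (insert x F)
  have "(\<Prod>v\<in>insert x F. a v) - (\<Prod>v\<in>insert x F. b v) =
     a x * ((\<Prod>v\<in>F. a v) - (\<Prod>v\<in>F. b v)) + (a x - b x) * (\<Prod>v\<in>F. b v)"
    using insert by (simp add: algebra_simps)
  then show ?case using insert by simp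
qed simp

lemma dvd_power_diff: "(d::'a::comm_ring_1) dvd (a - b) \<Longrightarrow> d dvd (a ^ k - b ^ k)"
  using dvd_prod_diff[of "{..<k}" d "\<lambda>_. a" "\<lambda>_. b"] by simp

lemma subst_dvd_diff:
  assumes "\<And>v. d dvd (\<sigma>1 v - \<sigma>2 v)"
  shows "d dvd (subst \<sigma>1 f - subst \<sigma>2 f)"
  using subset_UNIV[of "Poly_Mapping.keys f"]
proof (induction f rule: frag_induction)
  case (one m)
  show ?case
    unfolding subst_single1 meval_def
    by (rule dvd_prod_diff) (auto intro: dvd_power_diff assms)
next
  case (diff a b)
  have "subst \<sigma>1 (a - b) - subst \<sigma>2 (a - b) = (subst \<sigma>1 a - subst \<sigma>2 a) - (subst \<sigma>1 b - subst \<sigma>2 b)"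
    by simp
  then show ?case using diff by (metis dvd_diff)
qed simp

abbreviation xv :: "nat \<Rightarrow> poly" where "xv j \<equiv> pvar (X j)"
abbreviation tv :: "nat \<Rightarrow> poly" where "tv j \<equiv> pvar (T j)"

lemma pvar_inj[simp]: "pvar v = pvar w \<longleftrightarrow> v = w"
proof
  assume "pvar v = pvar w"
  then have "Poly_Mapping.single (Poly_Mapping.single v (1::nat)) (1::int) = Poly_Mapping.single (Poly_Mapping.single w 1) 1"
    by (simp add: pvar_def)
  then have "Poly_Mapping.single v (1::nat) = Poly_Mapping.single w 1"
    by (metis lookup_single_eq lookup_single_not_eq zero_neq_one)
  then show "v = w"
    by (metis lookup_single_eq lookup_single_not_eq zero_neq_one)
qed simp

lemma pvar_ne0[simp]: "pvar v \<noteq> 0"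
  unfolding pvar_def by simp

lemma xt_ne0: "xv i - tv c \<noteq> 0"
  by simp

lemma tA_eq: "tA i A = tv (cobar A i)" by (simp add: tA_def)

section \<open>divided differences\<close>

lemma Rplus_Rminus_dvd: "(xv i - tA i A) dvd (Rplus i A f - Rminus i A f)"
  unfolding Rplus_def Rminus_def
proof (rule subst_dvd_diff)
  fix v show "(xv i - tA i A) dvd
    ((case v of X j \<Rightarrow> if j \<le> i then xv j else if j = Suc i then tA i A else xv (j - 1) | T j \<Rightarrow> tv j) -
     (case v of X j \<Rightarrow> if j < i then xv j else if j = i then tA i A else xv (j - 1) | T j \<Rightarrow> tv j))"
  proof (cases v)
    case (X j)
    consider "j < i" | "j = i" | "j = Suc i" | "j > Suc i" by linarith
    then show ?thesis
    proof cases
      case 3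
      have "(xv i - tA i A) dvd (tA i A - xv i)"
        by (metis dvd_minus_iff dvd_refl minus_diff_eq)
      then show ?thesis using 3 X by simp
    qed (use X in auto)
  qed simp
qed

lemma EA_eq: "(xv i - tA i A) * EA i A f = Rplus i A f - Rminus i A f"
proof -
  obtain q where q: "Rplus i A f - Rminus i A f = (xv i - tA i A) * q"
    using Rplus_Rminus_dvd by (metis dvdE)
  have "\<exists>!g. (xv i - tA i A) * g = Rplus i A f - Rminus i A f"
    using q by (auto simp: tA_eq)
  then show ?thesis unfolding EA_def by (rule theI')
qed

lemma EA_unique: "(xv i - tA i A) * g = Rplus i A f - Rminus i A f \<Longrightarrow> EA i A f = g"
  using EA_eq[of i A f] by (metis mult_left_cancel xt_ne0 tA_eq)


lemma enum_unique:
  fixes S :: "nat set"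
  assumes inf: "infinite S" and sm: "strict_mono h" and rg: "range h = S"
  shows "enumerate S n = h n"
proof (induction n)
  case 0
  have "h 0 \<in> S" using rg by auto
  moreover have "\<And>s. s \<in> S \<Longrightarrow> h 0 \<le> s"
    using rg sm by (auto simp: strict_mono_less_eq)
  ultimately show ?case by (simp add: enumerate_0 Least_equality)
next
  case (Suc n)
  have "enumerate S (Suc n) = (LEAST s. s \<in> S \<and> enumerate S n < s)"
    using enumerate_Suc''[OF inf] .
  also have "\<dots> = h (Suc n)"
  proof (rule Least_equality)
    show "h (Suc n) \<in> S \<and> enumerate S n < h (Suc n)"
      using rg sm Suc by (auto simp: strict_mono_def)
    fix y assume "y \<in> S \<and> enumerate S n < y"
    then obtain k where k: "y = h k" "h n < h k" using rg Suc by auto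
    then have "n < k" using sm by (simp add: strict_mono_less)
    then show "h (Suc n) \<le> y" using k sm by (simp add: strict_mono_less_eq)
  qed
  finally show ?case .
qed

lemma inf_compl: "finite (A::nat set) \<Longrightarrow> infinite (- A)"
  by (simp add: Compl_eq_Diff_UNIV infinite_UNIV_nat)

lemma cobar_sm: "finite A \<Longrightarrow> strict_mono (cobar A)"
  unfolding cobar_def by (rule strict_mono_enumerate) (rule inf_compl)

lemma cobar_range: "finite A \<Longrightarrow> range (cobar A) = - A"
  unfolding cobar_def by (rule range_enumerate) (rule inf_compl)

lemma cobar_notin: "finite A \<Longrightarrow> cobar A j \<notin> A"
  using cobar_range by blast

lemma cobar_inj: "finite A \<Longrightarrow> cobar A i = cobar A j \<longleftrightarrow> i = j"
  using cobar_sm strict_mono_eq by blast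

lemma cobar_less: "finite A \<Longrightarrow> cobar A i < cobar A j \<longleftrightarrow> i < j"
  using cobar_sm strict_mono_less by blast

lemma cobar_le: "finite A \<Longrightarrow> cobar A i \<le> cobar A j \<longleftrightarrow> i \<le> j"
  using cobar_sm strict_mono_less_eq by blast

lemma finite_star[simp]: "finite S \<Longrightarrow> finite B \<Longrightarrow> finite (star S B)"
  by (simp add: star_def)

lemma cobar_char: "finite A \<Longrightarrow> strict_mono h \<Longrightarrow> range h = - A \<Longrightarrow> cobar A = h"
  unfolding cobar_def by (rule ext, rule enum_unique) (auto intro: inf_compl)

lemma cobar_star: assumes "finite S" "finite B" shows "cobar (star S B) = cobar B \<circ> cobar S"
proof (rule cobar_char)
  show "finite (star S B)" using assms by simp
  show "strict_mono (cobar B \<circ> cobar S)"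
    using cobar_sm assms by (simp add: strict_mono_def)
  show "range (cobar B \<circ> cobar S) = - star S B"
  proof -
    have "range (cobar B \<circ> cobar S) = cobar B ` (- S)"
      by (metis cobar_range[OF assms(1)] image_comp)
    also have "\<dots> = - star S B"
    proof
      show "cobar B ` (- S) \<subseteq> - star S B"
        using assms by (auto simp: star_def cobar_inj cobar_notin)
      show "- star S B \<subseteq> cobar B ` (- S)"
      proof
        fix x assume x: "x \<in> - star S B"
        then have "x \<in> - B" by (auto simp: star_def)
        then obtain k where "x = cobar B k" using cobar_range[OF assms(2)] by auto
        with x show "x \<in> cobar B ` (- S)" by (auto simp: star_def)
      qed
    qed
    finally show ?thesis .
  qed
qed

lemma cobar_star_app: "finite S \<Longrightarrow> finite B \<Longrightarrow> cobar (star S B) j = cobar B (cobar S j)"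
  using cobar_star by simp

lemma star_assoc: assumes "finite S" "finite B"
  shows "star (star A S) B = star A (star S B)"
proof -
  have e: "cobar (star S B) ` A = cobar B ` cobar S ` A" by (simp add: cobar_star_app assms image_image)
  show ?thesis by (simp only: star_def[of A "star S B"] e) (simp add: star_def image_Un Un_assoc)
qed

lemma star_empty_left[simp]: "star {} B = B" by (simp add: star_def)

lemma cobar_empty: "cobar {} = id"
  by (rule cobar_char) (auto simp: strict_mono_def)

lemma cobar_single: "cobar {i} j = (if j < i then j else Suc j)"
proof -
  have "cobar {i} = (\<lambda>j. if j < i then j else Suc j)"
  proof (rule cobar_char)
    show "strict_mono (\<lambda>j. if j < i then j else Suc j)"
      by (auto simp: strict_mono_def)
    show "range (\<lambda>j. if j < i then j else Suc j) = - {i}"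
    proof
      show "- {i} \<subseteq> range (\<lambda>j. if j < i then j else Suc j)"
      proof
        fix x assume "x \<in> - {i}"
        show "x \<in> range (\<lambda>j. if j < i then j else Suc j)"
        proof (cases "x < i")
          case True then show ?thesis by (intro image_eqI[of _ _ x]) auto
        next
          case False
          with \<open>x \<in> - {i}\<close> have "x > i" by auto
          then show ?thesis by (intro image_eqI[of _ _ "x - 1"]) auto
        qed
      qed
    qed auto
  qed simp
  then show ?thesis by simp
qed

lemma star_single_empty: "star {i} {} = {i}"
  by (simp add: star_def cobar_empty)

section \<open>relabelling of t-variables\<close>

definition rl :: "nat set \<Rightarrow> poly \<Rightarrow> poly" where
  "rl B = subst (\<lambda>v. case v of X j \<Rightarrow> xv j | T j \<Rightarrow> tv (cobar B j))"

lemma rl_empty: "rl {} f = f"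
proof -
  have "(\<lambda>v. case v of X j \<Rightarrow> xv j | T j \<Rightarrow> tv (cobar {} j)) = pvar"
    by (rule ext) (auto split: var.split simp: cobar_empty)
  then show ?thesis by (simp add: rl_def)
qed

lemma hat_t_rl: "hat_t i f = rl {i} f"
  unfolding hat_t_def rl_def cobar_single ..

lemma rl_Rplus: assumes "finite A" "finite B"
  shows "rl B (Rplus i A g) = Rplus i (star A B) (rl B g)"
  unfolding rl_def Rplus_def subst_subst
  by (rule arg_cong[where f="\<lambda>s. subst s g"], rule ext)
     (auto split: var.split simp: tA_eq cobar_star_app assms)

lemma rl_Rminus: assumes "finite A" "finite B"
  shows "rl B (Rminus i A g) = Rminus i (star A B) (rl B g)"
  unfolding rl_def Rminus_def subst_subst
  by (rule arg_cong[where f="\<lambda>s. subst s g"], rule ext)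
     (auto split: var.split simp: tA_eq cobar_star_app assms)

lemma rl_evA: assumes "finite A" "finite B"
  shows "rl B (evA A g) = evA (star A B) (rl B g)"
  unfolding rl_def evA_def subst_subst
  by (rule arg_cong[where f="\<lambda>s. subst s g"], rule ext)
     (auto split: var.split simp: tA_eq cobar_star_app assms)

lemma rl_tA: assumes "finite A" "finite B" shows "rl B (tA i A) = tA i (star A B)"
  by (simp add: rl_def tA_eq cobar_star_app assms)

lemma rl_xv[simp]: "rl B (xv i) = xv i"
  by (simp add: rl_def)

lemma rl_mult[simp]: "rl B (f * g) = rl B f * rl B g" by (simp add: rl_def)
lemma rl_diff[simp]: "rl B (f - g) = rl B f - rl B g" by (simp add: rl_def)

lemma rl_EA: assumes "finite A" "finite B"
  shows "rl B (EA i A g) = EA i (star A B) (rl B g)"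
proof (rule sym, rule EA_unique)
  have "(xv i - tA i (star A B)) * rl B (EA i A g) = rl B ((xv i - tA i A) * EA i A g)"
    by (simp add: rl_tA assms)
  also have "\<dots> = Rplus i (star A B) (rl B g) - Rminus i (star A B) (rl B g)"
    by (simp add: EA_eq rl_Rplus rl_Rminus assms)
  finally show "(xv i - tA i (star A B)) * rl B (EA i A g) = Rplus i (star A B) (rl B g) - Rminus i (star A B) (rl B g)" .
qed

fun starB :: "nat list \<Rightarrow> nat set \<Rightarrow> nat set" where
  "starB [] B = B"
| "starB (j # js) B = star {j} (starB js B)"

fun EseqB :: "nat list \<Rightarrow> nat set \<Rightarrow> poly \<Rightarrow> poly" where
  "EseqB [] B f = f"
| "EseqB (j # js) B f = EA j (starB js B) (EseqB js B f)"

definition coefB :: "nat set \<Rightarrow> poly \<Rightarrow> nat list \<Rightarrow> poly" where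
  "coefB B f w = evA (starB w B) (EseqB w B f)"

lemma star_list_starB: "star_list w = starB w {}"
  by (induction w) auto

lemma Eseq_EseqB: "Eseq w f = EseqB w {} f"
  by (induction w) (auto simp: star_list_starB)

lemma coef_coefB: "coef f w = coefB {} f w"
  by (simp add: coef_def coefB_def star_list_starB Eseq_EseqB)

lemma finite_starB[simp]: "finite B \<Longrightarrow> finite (starB w B)"
  by (induction w) auto

lemma starB_snoc: "starB (w @ [i]) B = starB w (star {i} B)"
  by (induction w) auto

lemma EseqB_snoc: "EseqB (w @ [i]) B f = EseqB w (star {i} B) (EA i B f)"
  by (induction w) (auto simp: starB_snoc)

lemma coefB_snoc: "coefB B f (w @ [i]) = coefB (star {i} B) (EA i B f) w"
  by (simp add: coefB_def starB_snoc EseqB_snoc)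

lemma coefB_Nil: "coefB B f [] = evA B f"
  by (simp add: coefB_def)

lemma starB_rl: "finite B \<Longrightarrow> starB w B = star (starB w {}) B"
proof (induction w)
  case (Cons j js)
  then show ?case by (simp add: star_assoc)
qed simp

lemma EseqB_rl: "finite B \<Longrightarrow> EseqB w B (rl B g) = rl B (EseqB w {} g)"
proof (induction w)
  case (Cons j js)
  then show ?case by (simp add: rl_EA starB_rl[of B js])
qed simp

lemma coefB_rl: "finite B \<Longrightarrow> coefB B (rl B g) w = rl B (coefB {} g w)"
  by (simp add: coefB_def EseqB_rl rl_evA starB_rl[of B w])


lemma mdeg_superset: "finite S \<Longrightarrow> Poly_Mapping.keys m \<subseteq> S \<Longrightarrow> mdeg m = (\<Sum>v\<in>S. Poly_Mapping.lookup m v)"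
  unfolding mdeg_def by (rule sum.mono_neutral_left) (auto simp: in_keys_iff)

lemma mdeg_add[simp]: "mdeg (a + b) = mdeg a + mdeg b"
proof -
  let ?S = "Poly_Mapping.keys a \<union> Poly_Mapping.keys b"
  have "mdeg (a + b) = (\<Sum>v\<in>?S. Poly_Mapping.lookup (a+b) v)"
    by (rule mdeg_superset) (auto simp: keys_add)
  also have "\<dots> = mdeg a + mdeg b"
    by (simp add: lookup_add sum.distrib mdeg_superset[of ?S])
  finally show ?thesis .
qed

lemma mdeg_0[simp]: "mdeg 0 = 0" by (simp add: mdeg_def)

lemma mdeg_single[simp]: "mdeg (Poly_Mapping.single v k) = k"
  by (cases "k = 0") (auto simp: mdeg_def)

lemma mdeg_eq_0: "mdeg m = 0 \<longleftrightarrow> m = 0"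
  unfolding mdeg_def by (auto simp: in_keys_iff intro: poly_mapping_eqI)

definition hom :: "nat \<Rightarrow> poly \<Rightarrow> bool" where
  "hom d f \<longleftrightarrow> (\<forall>m\<in>Poly_Mapping.keys f. mdeg m = d)"

lemma hom_0[simp]: "hom d 0" by (simp add: hom_def)

lemma hom_add: "hom d f \<Longrightarrow> hom d g \<Longrightarrow> hom d (f + g)"
  unfolding hom_def using keys_add[of f g] by blast

lemma hom_uminus: "hom d f \<Longrightarrow> hom d (- f)"
  unfolding hom_def by simp

lemma hom_diff: "hom d f \<Longrightarrow> hom d g \<Longrightarrow> hom d (f - g)"
  using hom_add[OF _ hom_uminus] by (metis diff_conv_add_uminus)

lemma hom_sum: "(\<And>i. i \<in> I \<Longrightarrow> hom d (g i)) \<Longrightarrow> hom d (\<Sum>i\<in>I. g i)"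
  by (induction I rule: infinite_finite_induct) (auto intro: hom_add)

lemma hom_mult: "hom a p \<Longrightarrow> hom b q \<Longrightarrow> hom (a + b) (p * q)"
  unfolding hom_def using keys_mult[of p q] by fastforce

lemma hom_power: "hom a p \<Longrightarrow> hom (a * k) (p ^ k)"
proof (induction k)
  case 0
  have "hom 0 (1::poly)" by (simp add: hom_def lookup_one in_keys_iff when_def)
  then show ?case by simp
next
  case (Suc k)
  then show ?case using hom_mult[of a p "a*k" "p^k"] by (simp add: algebra_simps)
qed

lemma hom_one: "hom 0 (1::poly)" by (simp add: hom_def lookup_one in_keys_iff when_def)

lemma hom_prod: "finite I \<Longrightarrow> (\<And>i. i \<in> I \<Longrightarrow> hom (a i) (g i)) \<Longrightarrow> hom (\<Sum>i\<in>I. a i) (\<Prod>i\<in>I. g i)"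
  by (induction I rule: finite_induct) (auto intro: hom_mult hom_one)

lemma hom_pvar: "hom 1 (pvar v)" by (simp add: hom_def pvar_def)

lemma hom_pconst: "hom 0 (pconst c)" by (simp add: hom_def pconst_def)

lemma hom_cmul: "hom d p \<Longrightarrow> hom d (frag_cmul c p)"
  unfolding hom_def using keys_cmul by blast

lemma hom_subst: assumes "\<And>v. hom 1 (\<sigma> v)" "hom d f" shows "hom d (subst \<sigma> f)"
  unfolding subst_frag frag_extend_def
proof (rule hom_sum, rule hom_cmul)
  fix m assume m: "m \<in> Poly_Mapping.keys f"
  have "hom (\<Sum>v\<in>Poly_Mapping.keys m. 1 * Poly_Mapping.lookup m v) (meval \<sigma> m)"
    unfolding meval_def by (rule hom_prod) (simp, metis hom_power[OF assms(1)])
  then show "hom d (meval \<sigma> m)" using assms(2) m by (simp add: hom_def mdeg_def)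
qed

lemma hom_zero_const: "hom 0 f \<Longrightarrow> f = pconst (Poly_Mapping.lookup f 0)"
  unfolding hom_def pconst_def
  by (rule poly_mapping_eqI) (auto simp: lookup_single when_def mdeg_eq_0 in_keys_iff)

definition hc :: "nat \<Rightarrow> poly \<Rightarrow> poly" where
  "hc k f = frag_extend (\<lambda>m. if mdeg m = k then frag_of m else 0) f"

lemma lookup_frag_extend_sel:
  "Poly_Mapping.lookup (frag_extend (\<lambda>m. if P m then frag_of m else 0) f) m' = (if P m' then Poly_Mapping.lookup f m' else 0)"
proof -
  have "Poly_Mapping.lookup (\<Sum>i\<in>Poly_Mapping.keys f. frag_cmul (Poly_Mapping.lookup f i) (if P i then frag_of i else 0)) m'
     = (\<Sum>i\<in>Poly_Mapping.keys f. if i = m' \<and> P i then Poly_Mapping.lookup f i else 0)"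
    by (auto simp: lookup_sum lookup_single when_def intro!: sum.cong)
  also have "\<dots> = (\<Sum>i\<in>Poly_Mapping.keys f. if i = m' then (if P m' then Poly_Mapping.lookup f i else 0) else 0)"
    by (rule sum.cong) auto
  also have "\<dots> = (if P m' then Poly_Mapping.lookup f m' else 0)"
    by (subst sum.delta) (auto simp: in_keys_iff)
  finally show ?thesis by (simp add: frag_extend_def)
qed

lemma lookup_hc: "Poly_Mapping.lookup (hc k f) m = (if mdeg m = k then Poly_Mapping.lookup f m else 0)"
  unfolding hc_def by (rule lookup_frag_extend_sel)

lemma hom_hc: "hom k (hc k f)"
  unfolding hom_def by (auto simp: in_keys_iff lookup_hc split: if_splits)

lemma hc_add: "hc k (f + g) = hc k f + hc k g" by (simp add: hc_def frag_extend_add)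
lemma hc_diff: "hc k (f - g) = hc k f - hc k g" by (simp add: hc_def frag_extend_diff)
lemma hc_sum: "finite I \<Longrightarrow> hc k (\<Sum>i\<in>I. g i) = (\<Sum>i\<in>I. hc k (g i))"
  by (simp add: hc_def frag_extend_sum comp_def)

lemma hc_hom_same: "hom k f \<Longrightarrow> hc k f = f"
  by (rule poly_mapping_eqI) (auto simp: lookup_hc hom_def in_keys_iff)

lemma hc_hom_other: "hom j f \<Longrightarrow> j \<noteq> k \<Longrightarrow> hc k f = 0"
  by (rule poly_mapping_eqI) (auto simp: lookup_hc hom_def in_keys_iff)

lemma hc_decomp: "f = (\<Sum>k\<in>mdeg ` Poly_Mapping.keys f. hc k f)"
proof (rule poly_mapping_eqI)
  fix m
  have "Poly_Mapping.lookup (\<Sum>k\<in>mdeg ` Poly_Mapping.keys f. hc k f) m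
      = (\<Sum>k\<in>mdeg ` Poly_Mapping.keys f. if mdeg m = k then Poly_Mapping.lookup f m else 0)"
    by (simp add: lookup_sum lookup_hc)
  also have "\<dots> = (if mdeg m \<in> mdeg ` Poly_Mapping.keys f then Poly_Mapping.lookup f m else 0)"
    by (rule sum.delta') simp
  also have "\<dots> = Poly_Mapping.lookup f m"
    by (metis image_eqI in_keys_iff)
  finally show "Poly_Mapping.lookup f m = Poly_Mapping.lookup (\<Sum>k\<in>mdeg ` Poly_Mapping.keys f. hc k f) m" by simp
qed

lemma hc_zero_all: "(\<And>k. hc k f = 0) \<Longrightarrow> f = 0"
  by (subst hc_decomp) simp

lemma hc_not_in: "k \<notin> mdeg ` Poly_Mapping.keys f \<Longrightarrow> hc k f = 0"
  by (rule poly_mapping_eqI) (auto simp: lookup_hc in_keys_iff)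

lemma hc_mult_hom: assumes p: "hom a p" shows "hc (a + k) (p * g) = p * hc k g"
proof -
  let ?J = "mdeg ` Poly_Mapping.keys g"
  have "p * g = (\<Sum>j\<in>?J. p * hc j g)"
    by (subst hc_decomp) (simp add: sum_distrib_left)
  then have "hc (a + k) (p * g) = (\<Sum>j\<in>?J. hc (a + k) (p * hc j g))"
    by (simp add: hc_sum)
  also have "\<dots> = (\<Sum>j\<in>?J. if j = k then p * hc k g else 0)"
  proof (rule sum.cong[OF refl])
    fix j assume "j \<in> ?J"
    have h: "hom (a + j) (p * hc j g)" by (rule hom_mult[OF p hom_hc])
    show "hc (a + k) (p * hc j g) = (if j = k then p * hc k g else 0)"
      using hc_hom_same[OF h] hc_hom_other[OF h] by auto
  qed
  also have "\<dots> = (if k \<in> ?J then p * hc k g else 0)"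
    by (rule sum.delta) simp
  also have "\<dots> = p * hc k g"
    using hc_not_in[of k g] by auto
  finally show ?thesis .
qed

lemma hom_quotient:
  assumes p: "hom 1 p" "p \<noteq> 0" and h: "hom d (p * g)"
  shows "hom (d - 1) g" "d = 0 \<Longrightarrow> g = 0"
proof -
  have z: "hc k g = 0" if "Suc k \<noteq> d" for k
  proof -
    have "p * hc k g = hc (1 + k) (p * g)" by (rule hc_mult_hom[OF p(1), symmetric])
    also have "\<dots> = 0" using hc_hom_other[OF h, of "1 + k"] that by simp
    finally show ?thesis using p(2) by simp
  qed
  show g0: "g = 0" if "d = 0"
  proof (rule hc_zero_all)
    fix k show "hc k g = 0" by (rule z) (simp add: that)
  qed
  show "hom (d - 1) g"
  proof (cases "d = 0")
    case True then show ?thesis using g0 by simp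
  next
    case False
    have "g = (\<Sum>k\<in>mdeg ` Poly_Mapping.keys g. hc k g)" by (rule hc_decomp)
    also have "\<dots> = (\<Sum>k\<in>mdeg ` Poly_Mapping.keys g. if k = d - 1 then hc k g else 0)"
    proof (rule sum.cong[OF refl])
      fix k show "hc k g = (if k = d - 1 then hc k g else 0)"
      proof (cases "k = d - 1")
        case False then have "Suc k \<noteq> d" by simp
        then show ?thesis using z False by simp
      qed simp
    qed
    finally have "g = (\<Sum>k\<in>mdeg ` Poly_Mapping.keys g. if k = d - 1 then hc k g else 0)" .
    moreover have "hom (d - 1) (\<Sum>k\<in>mdeg ` Poly_Mapping.keys g. if k = d - 1 then hc k g else 0)"
      by (rule hom_sum) (auto intro: hom_hc)
    ultimately show ?thesis by simp
  qed
qed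


lemma EA_add: "EA i A (f + g) = EA i A f + EA i A g"
  by (rule EA_unique) (simp add: distrib_left EA_eq Rplus_def Rminus_def)

lemma EA_diff: "EA i A (f - g) = EA i A f - EA i A g"
  by (rule EA_unique) (simp add: right_diff_distrib EA_eq Rplus_def Rminus_def)

lemma EA_zero[simp]: "EA i A 0 = 0"
  by (rule EA_unique) (simp add: Rplus_def Rminus_def)

lemma EA_sum: "finite I \<Longrightarrow> EA i A (\<Sum>k\<in>I. g k) = (\<Sum>k\<in>I. EA i A (g k))"
  by (induction I rule: finite_induct) (auto simp: EA_add)

lemma evA_add: "evA A (f + g) = evA A f + evA A g" by (simp add: evA_def)
lemma evA_diff: "evA A (f - g) = evA A f - evA A g" by (simp add: evA_def)
lemma evA_zero[simp]: "evA A 0 = 0" by (simp add: evA_def)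
lemma evA_sum: "finite I \<Longrightarrow> evA A (\<Sum>k\<in>I. g k) = (\<Sum>k\<in>I. evA A (g k))" by (simp add: evA_def)

lemma EseqB_zero[simp]: "EseqB w B 0 = 0" by (induction w) auto
lemma EseqB_add: "EseqB w B (f + g) = EseqB w B f + EseqB w B g" by (induction w) (auto simp: EA_add)
lemma EseqB_diff: "EseqB w B (f - g) = EseqB w B f - EseqB w B g" by (induction w) (auto simp: EA_diff)
lemma EseqB_sum: "finite I \<Longrightarrow> EseqB w B (\<Sum>k\<in>I. g k) = (\<Sum>k\<in>I. EseqB w B (g k))"
  by (induction w) (auto simp: EA_sum)

lemma coefB_zero[simp]: "coefB B 0 w = 0" by (simp add: coefB_def)
lemma coefB_add: "coefB B (f + g) w = coefB B f w + coefB B g w" by (simp add: coefB_def EseqB_add evA_add)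
lemma coefB_diff: "coefB B (f - g) w = coefB B f w - coefB B g w" by (simp add: coefB_def EseqB_diff evA_diff)
lemma coefB_sum: "finite I \<Longrightarrow> coefB B (\<Sum>k\<in>I. g k) w = (\<Sum>k\<in>I. coefB B (g k) w)"
  by (simp add: coefB_def EseqB_sum evA_sum)

lemma hom_pvar_Suc[simp]: "hom (Suc 0) (pvar v)" using hom_pvar by simp
lemma hom_xt_Suc[simp]: "hom (Suc 0) (xv i - tv c)" using hom_diff[OF hom_pvar hom_pvar] by simp

lemma hom_Rplus: "hom d f \<Longrightarrow> hom d (Rplus i A f)"
  unfolding Rplus_def by (rule hom_subst) (auto split: var.split simp: hom_pvar tA_eq)

lemma hom_Rminus: "hom d f \<Longrightarrow> hom d (Rminus i A f)"
  unfolding Rminus_def by (rule hom_subst) (auto split: var.split simp: hom_pvar tA_eq)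

lemma hom_evA: "hom d f \<Longrightarrow> hom d (evA A f)"
  unfolding evA_def by (rule hom_subst) (auto split: var.split simp: hom_pvar tA_eq)

lemma hom_rl: "hom d f \<Longrightarrow> hom d (rl B f)"
  unfolding rl_def by (rule hom_subst) (auto split: var.split simp: hom_pvar)

lemma hom_xt: "hom 1 (xv i - tA i A)"
  by (simp add: tA_eq)

lemma hom_EA: assumes "hom d f" shows "hom (d - 1) (EA i A f)" "d = 0 \<Longrightarrow> EA i A f = 0"
proof -
  have h: "hom d ((xv i - tA i A) * EA i A f)"
    unfolding EA_eq by (intro hom_diff hom_Rplus hom_Rminus assms)
  show "hom (d - 1) (EA i A f)" by (rule hom_quotient(1)[OF hom_xt _ h]) (simp add: tA_eq)
  show "d = 0 \<Longrightarrow> EA i A f = 0" by (rule hom_quotient(2)[OF hom_xt _ h]) (simp_all add: tA_eq)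
qed

lemma hom_EseqB: "hom d f \<Longrightarrow> hom (d - length w) (EseqB w B f) \<and> (length w > d \<longrightarrow> EseqB w B f = 0)"
proof (induction w)
  case (Cons j js)
  then show ?case using hom_EA[of "d - length js" "EseqB js B f" j "starB js B"]
    by (auto simp: diff_Suc less_Suc_eq split: nat.split)
qed simp

lemma hom_coefB: assumes "hom d f"
  shows "hom (d - length w) (coefB B f w)" "length w > d \<Longrightarrow> coefB B f w = 0"
  using hom_EseqB[OF assms, of w B] by (auto simp: coefB_def intro: hom_evA)

definition degle :: "nat \<Rightarrow> poly \<Rightarrow> bool" where
  "degle d f \<longleftrightarrow> (\<forall>m\<in>Poly_Mapping.keys f. mdeg m \<le> d)"

lemma degle_hom: "hom k f \<Longrightarrow> k \<le> d \<Longrightarrow> degle d f"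
  by (auto simp: hom_def degle_def)

lemma degle_add: "degle d f \<Longrightarrow> degle d g \<Longrightarrow> degle d (f + g)"
  unfolding degle_def using keys_add[of f g] by blast

lemma degle_sum: "(\<And>i. i \<in> I \<Longrightarrow> degle d (g i)) \<Longrightarrow> degle d (\<Sum>i\<in>I. g i)"
proof (induction I rule: infinite_finite_induct)
  case (insert x F) then show ?case by (auto intro: degle_add)
qed (auto simp: degle_def)

lemma degle_exists: "\<exists>d. degle d f"
  by (rule exI[of _ "Max (mdeg ` Poly_Mapping.keys f)"]) (auto simp: degle_def)

lemma degle_EA: assumes "degle d f" shows "degle (d - 1) (EA i A f)" "d = 0 \<Longrightarrow> EA i A f = 0"
proof -
  let ?K = "mdeg ` Poly_Mapping.keys f"
  have K: "k \<in> ?K \<Longrightarrow> k \<le> d" for k using assms by (auto simp: degle_def)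
  have e: "EA i A f = (\<Sum>k\<in>?K. EA i A (hc k f))"
    by (subst hc_decomp) (simp add: EA_sum)
  show "degle (d - 1) (EA i A f)"
    unfolding e by (rule degle_sum, rule degle_hom, rule hom_EA(1)[OF hom_hc]) (use K in force)
  show "d = 0 \<Longrightarrow> EA i A f = 0"
  proof -
    assume d0: "d = 0"
    show ?thesis unfolding e
    proof (rule sum.neutral, rule ballI)
      fix k assume "k \<in> ?K"
      then have "k = 0" using K d0 by force
      then show "EA i A (hc k f) = 0" using hom_EA(2)[OF hom_hc, of k] by simp
    qed
  qed
qed

lemma degle0_const: "degle 0 f \<Longrightarrow> f = pconst (Poly_Mapping.lookup f 0)"
  by (rule hom_zero_const) (auto simp: degle_def hom_def)

section \<open>bounded x-variables\<close>

definition kill :: "nat \<Rightarrow> poly \<Rightarrow> poly" where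
  "kill n = subst (\<lambda>v. case v of X j \<Rightarrow> if j < n then xv j else 0 | T j \<Rightarrow> tv j)"

definition xb :: "nat \<Rightarrow> poly \<Rightarrow> bool" where
  "xb n g \<longleftrightarrow> kill n g = g"

lemma xb_exists: "\<exists>n. xb n g"
proof -
  let ?n = "Suc (Max ({j. X j \<in> vars g}))"
  have fin: "finite {j. X j \<in> vars g}"
  proof -
    have "finite (vars g)" by (simp add: vars_def)
    then have "finite (inv X ` vars g)" by simp
    moreover have "{j. X j \<in> vars g} \<subseteq> inv X ` vars g"
    proof
      fix j assume "j \<in> {j. X j \<in> vars g}"
      then show "j \<in> inv X ` vars g" by (intro image_eqI[of _ _ "X j"]) (auto simp: inv_f_f inj_def)
    qed
    ultimately show ?thesis by (rule finite_subset[rotated])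
  qed
  have "kill ?n g = g"
    unfolding kill_def
  proof (rule subst_id_vars)
    fix v assume v: "v \<in> vars g"
    show "(case v of X j \<Rightarrow> if j < ?n then xv j else 0 | T j \<Rightarrow> tv j) = pvar v"
    proof (cases v)
      case (X j)
      then have "j \<le> Max {j. X j \<in> vars g}" using v fin by (auto intro: Max_ge)
      then show ?thesis using X by auto
    qed simp
  qed
  then show ?thesis by (auto simp: xb_def)
qed

lemma xb_subst_cong: assumes "xb n g" "\<And>j. j < n \<Longrightarrow> \<sigma> (X j) = \<tau> (X j)" "\<And>j. \<sigma> (T j) = \<tau> (T j)"
  shows "subst \<sigma> g = subst \<tau> g"
proof -
  have "subst \<sigma> g = subst \<sigma> (kill n g)" using assms(1) by (simp add: xb_def)
  also have "\<dots> = subst \<tau> (kill n g)"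
    unfolding kill_def subst_subst
    by (rule arg_cong[where f="\<lambda>s. subst s g"], rule ext) (auto split: var.split simp: assms)
  also have "\<dots> = subst \<tau> g" using assms(1) by (simp add: xb_def)
  finally show ?thesis .
qed

lemma xb_subst_global: "(\<And>v. xb m (\<sigma> v)) \<Longrightarrow> xb m (subst \<sigma> g)"
  unfolding xb_def kill_def subst_subst by simp

lemma xb_0[simp]: "xb m 0" by (simp add: xb_def kill_def)
lemma xb_xv: "j < m \<Longrightarrow> xb m (xv j)" by (simp add: xb_def kill_def)
lemma xb_tv[simp]: "xb m (tv j)" by (simp add: xb_def kill_def)
lemma xb_tA[simp]: "xb m (tA i A)" by (simp add: tA_eq)

lemma xb_subst: assumes "xb n g" "\<And>j. j < n \<Longrightarrow> xb m (\<sigma> (X j))" "\<And>j. xb m (\<sigma> (T j))"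
  shows "xb m (subst \<sigma> g)"
proof -
  let ?\<sigma>' = "\<lambda>v. case v of X j \<Rightarrow> if j < n then \<sigma> (X j) else 0 | T j \<Rightarrow> \<sigma> (T j)"
  have "subst \<sigma> g = subst ?\<sigma>' g" by (rule xb_subst_cong[OF assms(1)]) auto
  moreover have "xb m (subst ?\<sigma>' g)"
    by (rule xb_subst_global) (auto split: var.split simp: assms)
  ultimately show ?thesis by simp
qed

lemma xb_mono: "xb n g \<Longrightarrow> n \<le> m \<Longrightarrow> xb m g"
  using xb_subst[of n g m pvar] by (auto simp: xb_xv)

lemma xb_mult: "xb m f \<Longrightarrow> xb m g \<Longrightarrow> xb m (f * g)"
  by (simp add: xb_def kill_def)

lemma xb_diff: "xb m f \<Longrightarrow> xb m g \<Longrightarrow> xb m (f - g)"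
  by (simp add: xb_def kill_def)

lemma kill_mult: "kill m (f * g) = kill m f * kill m g" by (simp add: kill_def)

lemma xb_EA_vanish: assumes "xb n g" "n \<le> i" shows "EA i A g = 0"
proof (rule EA_unique)
  have "Rplus i A g = Rminus i A g"
    unfolding Rplus_def Rminus_def by (rule xb_subst_cong[OF assms(1)]) (use assms(2) in auto)
  then show "(xv i - tA i A) * 0 = Rplus i A g - Rminus i A g" by simp
qed

lemma xb_Rplus: "xb n g \<Longrightarrow> i < n \<Longrightarrow> xb n (Rplus i A g)"
  unfolding Rplus_def by (rule xb_subst) (auto simp: xb_xv)

lemma xb_Rminus: "xb n g \<Longrightarrow> i < n \<Longrightarrow> xb n (Rminus i A g)"
  unfolding Rminus_def by (rule xb_subst) (auto simp: xb_xv)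

lemma xb_EA: assumes "xb n g" "i < n" shows "xb n (EA i A g)"
proof -
  have d: "xb n (xv i - tA i A)" using assms(2) by (simp add: xb_diff xb_xv)
  have "(xv i - tA i A) * kill n (EA i A g) = kill n ((xv i - tA i A) * EA i A g)"
    using d by (simp add: kill_mult xb_def)
  also have "\<dots> = (xv i - tA i A) * EA i A g"
    unfolding EA_eq using xb_diff[OF xb_Rplus xb_Rminus, OF assms(1,2) assms(1,2)] by (simp add: xb_def)
  finally show ?thesis by (simp add: xb_def tA_eq)
qed

lemma xb_evA: "xb m (evA A g)"
  unfolding evA_def by (rule xb_subst_global) (auto split: var.split)

lemma EA_all_zero: assumes "\<And>i. EA i B g = 0" shows "g = evA B g"
proof -
  obtain n where "xb n g" using xb_exists by blast
  then show ?thesis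
  proof (induction n)
    case 0
    have "evA B g = subst pvar g"
      unfolding evA_def by (rule xb_subst_cong[OF 0]) auto
    then show ?case by simp
  next
    case (Suc m)
    have "(xv m - tA m B) * EA m B g = Rplus m B g - Rminus m B g" by (rule EA_eq)
    then have e: "Rplus m B g = Rminus m B g" using assms by simp
    have "Rplus m B g = subst pvar g"
      unfolding Rplus_def by (rule xb_subst_cong[OF Suc.prems]) auto
    then have g: "g = Rminus m B g" using e by simp
    have "xb m (Rminus m B g)"
      unfolding Rminus_def by (rule xb_subst[OF Suc.prems]) (auto simp: xb_xv)
    then have "xb m g" using g by simp
    then show ?case by (rule Suc.IH)
  qed
qed

lemma coefB_inj: assumes "\<And>w. coefB B g w = 0" shows "g = 0"
proof -
  obtain d where "degle d g" using degle_exists by blast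
  then show ?thesis using assms
  proof (induction d arbitrary: B g)
    case 0
    have "g = pconst (Poly_Mapping.lookup g 0)" by (rule degle0_const[OF 0(1)])
    then have "evA B g = g" by (metis evA_def subst_pconst)
    then show ?case using 0(2)[of "[]"] by (simp add: coefB_Nil)
  next
    case (Suc d)
    have "EA i B g = 0" for i
    proof (rule Suc.IH)
      show "degle d (EA i B g)" using degle_EA(1)[OF Suc.prems(1)] by simp
      fix w show "coefB (star {i} B) (EA i B g) w = 0"
        using Suc.prems(2)[of "w @ [i]"] by (simp add: coefB_snoc)
    qed
    then have "g = evA B g" by (rule EA_all_zero)
    then show ?case using Suc.prems(2)[of "[]"] by (simp add: coefB_Nil)
  qed
qed

lemma EA_scalar: assumes "xb 0 h" shows "EA i A (h * f) = h * EA i A f"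
proof (rule EA_unique)
  have p: "Rplus i A h = h" "Rminus i A h = h"
    using xb_subst_cong[OF assms, of _ pvar] by (auto simp: Rplus_def Rminus_def)
  have m: "Rplus i A (h * f) = Rplus i A h * Rplus i A f" "Rminus i A (h * f) = Rminus i A h * Rminus i A f"
    by (simp_all add: Rplus_def Rminus_def)
  have "(xv i - tA i A) * (h * EA i A f) = h * ((xv i - tA i A) * EA i A f)" by (simp add: algebra_simps)
  also have "\<dots> = h * (Rplus i A f - Rminus i A f)" by (simp add: EA_eq)
  also have "\<dots> = Rplus i A (h * f) - Rminus i A (h * f)" by (simp add: m p right_diff_distrib)
  finally show "(xv i - tA i A) * (h * EA i A f) = Rplus i A (h * f) - Rminus i A (h * f)" .
qed

lemma evA_scalar: assumes "xb 0 h" shows "evA A (h * f) = h * evA A f"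
proof -
  have "evA A h = h" using xb_subst_cong[OF assms, of _ pvar] by (auto simp: evA_def)
  then show ?thesis by (simp add: evA_def)
qed

lemma EseqB_scalar: "xb 0 h \<Longrightarrow> EseqB w B (h * f) = h * EseqB w B f"
  by (induction w) (auto simp: EA_scalar)

lemma coefB_scalar: "xb 0 h \<Longrightarrow> coefB B (h * f) w = h * coefB B f w"
  by (simp add: coefB_def EseqB_scalar evA_scalar)

lemma xb_coefB: "xb 0 (coefB B f w)"
  by (simp add: coefB_def xb_evA)

lemma coefB_bound: "xb n g \<Longrightarrow> coefB B g w \<noteq> 0 \<Longrightarrow> \<forall>a\<in>set w. a < n"
proof (induction w arbitrary: B g rule: rev_induct)
  case (snoc i w)
  have ne: "coefB (star {i} B) (EA i B g) w \<noteq> 0" using snoc.prems(2) by (simp add: coefB_snoc)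
  then have "i < n" using xb_EA_vanish[OF snoc.prems(1), of i B] by (metis coefB_zero not_le)
  moreover have "xb n (EA i B g)" using xb_EA[OF snoc.prems(1) \<open>i < n\<close>] .
  ultimately show ?case using snoc.IH ne by auto
qed simp


definition Rp :: "nat \<Rightarrow> poly \<Rightarrow> poly \<Rightarrow> poly" where
  "Rp i e = subst (\<lambda>v. case v of X j \<Rightarrow> if j \<le> i then xv j else if j = Suc i then e else xv (j - 1) | T j \<Rightarrow> tv j)"
definition Rm :: "nat \<Rightarrow> poly \<Rightarrow> poly \<Rightarrow> poly" where
  "Rm i e = subst (\<lambda>v. case v of X j \<Rightarrow> if j < i then xv j else if j = i then e else xv (j - 1) | T j \<Rightarrow> tv j)"

lemma Rplus_Rp: "Rplus i A = Rp i (tA i A)" by (simp add: Rplus_def Rp_def fun_eq_iff)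
lemma Rminus_Rm: "Rminus i A = Rm i (tA i A)" by (simp add: Rminus_def Rm_def fun_eq_iff)

lemma comm_pp: "Suc i < j \<Longrightarrow> Rp i (tv b) (Rp j (tv a) f) = Rp (j - 1) (tv a) (Rp i (tv b) f)"
  unfolding Rp_def subst_subst
  by (rule arg_cong[where f="\<lambda>s. subst s f"], rule ext) (auto split: var.split)
lemma comm_pm: "Suc i < j \<Longrightarrow> Rp i (tv b) (Rm j (tv a) f) = Rm (j - 1) (tv a) (Rp i (tv b) f)"
  unfolding Rp_def Rm_def subst_subst
  by (rule arg_cong[where f="\<lambda>s. subst s f"], rule ext) (auto split: var.split)
lemma comm_mp: "Suc i < j \<Longrightarrow> Rm i (tv b) (Rp j (tv a) f) = Rp (j - 1) (tv a) (Rm i (tv b) f)"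
  unfolding Rp_def Rm_def subst_subst
  by (rule arg_cong[where f="\<lambda>s. subst s f"], rule ext) (auto split: var.split)
lemma comm_mm: "Suc i < j \<Longrightarrow> Rm i (tv b) (Rm j (tv a) f) = Rm (j - 1) (tv a) (Rm i (tv b) f)"
  unfolding Rm_def subst_subst
  by (rule arg_cong[where f="\<lambda>s. subst s f"], rule ext) (auto split: var.split)

lemma Rp_mult: "Rp i e (f * g) = Rp i e f * Rp i e g" by (simp add: Rp_def)
lemma Rm_mult: "Rm i e (f * g) = Rm i e f * Rm i e g" by (simp add: Rm_def)
lemma Rp_diff: "Rp i e (f - g) = Rp i e f - Rp i e g" by (simp add: Rp_def)
lemma Rm_diff: "Rm i e (f - g) = Rm i e f - Rm i e g" by (simp add: Rm_def)

lemma EA_comm: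
  assumes A: "finite A" and ij: "Suc i < j"
  shows "EA i (star {j} A) (EA j A f) = EA (j - 1) (star {i} A) (EA i A f)"
proof -
  let ?c = "tA j A" and ?d = "tA i A"
  have td: "tA i (star {j} A) = ?d" using A ij by (simp add: tA_eq cobar_star_app cobar_single)
  have cj: "cobar {i} (j - 1) = j" using ij by (simp add: cobar_single)
  have tc: "tA (j - 1) (star {i} A) = ?c" using A cobar_star_app[of "{i}" A "j - 1"] cj by (simp add: tA_eq)
  obtain a where a: "?c = tv a" by (simp add: tA_eq)
  obtain b where b: "?d = tv b" by (simp add: tA_eq)
  let ?L = "EA i (star {j} A) (EA j A f)" and ?M = "EA (j - 1) (star {i} A) (EA i A f)"
  have Rpx: "Rp i (tv b) (xv j - tv a) = xv (j - 1) - tv a" "Rm i (tv b) (xv j - tv a) = xv (j - 1) - tv a"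
    using ij by (simp_all add: Rp_def Rm_def)
  have Rpx2: "Rp (j - 1) (tv a) (xv i - tv b) = xv i - tv b" "Rm (j - 1) (tv a) (xv i - tv b) = xv i - tv b"
    using ij by (auto simp: Rp_def Rm_def)
  have L: "(xv i - tv b) * (xv (j - 1) - tv a) * ?L =
     Rp i (tv b) (Rp j (tv a) f) - Rp i (tv b) (Rm j (tv a) f) - Rm i (tv b) (Rp j (tv a) f) + Rm i (tv b) (Rm j (tv a) f)"
  proof -
    have e1: "(xv i - tv b) * ?L = Rp i (tv b) (EA j A f) - Rm i (tv b) (EA j A f)"
      using EA_eq[of i "star {j} A" "EA j A f"] td b by (simp add: Rplus_Rp Rminus_Rm)
    have "(xv i - tv b) * (xv (j - 1) - tv a) * ?L = (xv (j - 1) - tv a) * ((xv i - tv b) * ?L)"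
      by (simp only: ac_simps)
    also have "\<dots> = (xv (j - 1) - tv a) * (Rp i (tv b) (EA j A f) - Rm i (tv b) (EA j A f))"
      by (simp only: e1)
    also have "\<dots> = (xv (j - 1) - tv a) * Rp i (tv b) (EA j A f) - (xv (j - 1) - tv a) * Rm i (tv b) (EA j A f)"
      by (rule right_diff_distrib)
    also have "\<dots> = Rp i (tv b) ((xv j - tv a) * EA j A f) - Rm i (tv b) ((xv j - tv a) * EA j A f)"
      by (simp only: Rp_mult Rm_mult Rpx)
    also have "\<dots> = Rp i (tv b) (Rp j (tv a) f - Rm j (tv a) f) - Rm i (tv b) (Rp j (tv a) f - Rm j (tv a) f)"
      using EA_eq[of j A f] a by (simp add: Rplus_Rp Rminus_Rm)
    finally show ?thesis by (simp add: Rp_diff Rm_diff)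
  qed
  have M: "(xv i - tv b) * (xv (j - 1) - tv a) * ?M =
     Rp (j - 1) (tv a) (Rp i (tv b) f) - Rm (j - 1) (tv a) (Rp i (tv b) f) - Rp (j - 1) (tv a) (Rm i (tv b) f) + Rm (j - 1) (tv a) (Rm i (tv b) f)"
  proof -
    have e1: "(xv (j - 1) - tv a) * ?M = Rp (j - 1) (tv a) (EA i A f) - Rm (j - 1) (tv a) (EA i A f)"
      using EA_eq[of "j - 1" "star {i} A" "EA i A f"] tc a by (simp add: Rplus_Rp Rminus_Rm)
    have "(xv i - tv b) * (xv (j - 1) - tv a) * ?M = (xv i - tv b) * ((xv (j - 1) - tv a) * ?M)"
      by (simp only: ac_simps)
    also have "\<dots> = (xv i - tv b) * (Rp (j - 1) (tv a) (EA i A f) - Rm (j - 1) (tv a) (EA i A f))"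
      by (simp only: e1)
    also have "\<dots> = (xv i - tv b) * Rp (j - 1) (tv a) (EA i A f) - (xv i - tv b) * Rm (j - 1) (tv a) (EA i A f)"
      by (rule right_diff_distrib)
    also have "\<dots> = Rp (j - 1) (tv a) ((xv i - tv b) * EA i A f) - Rm (j - 1) (tv a) ((xv i - tv b) * EA i A f)"
      by (simp only: Rp_mult Rm_mult Rpx2)
    also have "\<dots> = Rp (j - 1) (tv a) (Rp i (tv b) f - Rm i (tv b) f) - Rm (j - 1) (tv a) (Rp i (tv b) f - Rm i (tv b) f)"
      using EA_eq[of i A f] b by (simp add: Rplus_Rp Rminus_Rm)
    finally show ?thesis by (simp add: Rp_diff Rm_diff)
  qed
  have "(xv i - tv b) * (xv (j - 1) - tv a) \<noteq> 0" by simp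
  moreover have "(xv i - tv b) * (xv (j - 1) - tv a) * ?L = (xv i - tv b) * (xv (j - 1) - tv a) * ?M"
    unfolding L M using ij by (simp add: comm_pp comm_pm comm_mp comm_mm)
  ultimately show ?thesis by simp
qed


section \<open>trees\<close>

abbreviation ins :: "tree \<Rightarrow> nat \<Rightarrow> nat \<Rightarrow> tree" where
  "ins t z i \<equiv> graft t z (elem i)"

lemma leaves_pos[simp]: "0 < leaves t"
  by (induction t) auto

lemma leaves_ge1[simp]: "Suc 0 \<le> leaves t"
  using leaves_pos[of t] by linarith

lemma elem_apply: "elem i k = (if k = i then Node Leaf Leaf else Leaf)"
  by (simp add: elem_def)

lemma ins_out: "\<not> (z \<le> i \<and> i < z + leaves t) \<Longrightarrow> ins t z i = t"
  by (induction t arbitrary: z) (auto simp: elem_apply)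

lemma leaves_ins: "leaves (ins t z i) = leaves t + (if z \<le> i \<and> i < z + leaves t then 1 else 0)"
  by (induction t arbitrary: z) (auto simp: elem_apply)

lemma qd_range: "q \<in> qd_tree t z \<Longrightarrow> z \<le> q \<and> Suc q < z + leaves t"
proof (induction t arbitrary: z)
  case (Node l r)
  then show ?case by (auto split: if_splits) (fastforce+)
qed simp

lemma qd_sep: "p \<in> qd_tree t z \<Longrightarrow> q \<in> qd_tree t z \<Longrightarrow> p < q \<Longrightarrow> Suc p < q"
proof (induction t arbitrary: z)
  case (Node l r)
  show ?case
  proof (cases "l = Leaf \<and> r = Leaf")
    case True then show ?thesis using Node by auto
  next
    case False
    then have pq: "p \<in> qd_tree l z \<union> qd_tree r (z + leaves l)" "q \<in> qd_tree l z \<union> qd_tree r (z + leaves l)"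
      using Node.prems by auto
    show ?thesis
    proof (cases "p \<in> qd_tree l z")
      case p: True
      show ?thesis
      proof (cases "q \<in> qd_tree l z")
        case True then show ?thesis using Node.IH(1) p Node.prems(3) by blast
      next
        case False then have "q \<in> qd_tree r (z + leaves l)" using pq by auto
        then show ?thesis using qd_range[OF p] qd_range[of q r] by force
      qed
    next
      case p: False
      then have p': "p \<in> qd_tree r (z + leaves l)" using pq by auto
      show ?thesis
      proof (cases "q \<in> qd_tree l z")
        case True then show ?thesis using qd_range[OF p'] qd_range[of q l z] Node.prems(3) by force
      next
        case False then have "q \<in> qd_tree r (z + leaves l)" using pq by auto
        then show ?thesis using Node.IH(2) p' Node.prems(3) by blast
      qed
    qed
  qed
qed simp

lemma qd_shift: "q + s \<in> qd_tree t (z + s) \<longleftrightarrow> q \<in> qd_tree t z"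
proof (induction t arbitrary: z)
  case (Node l r)
  have "q + s \<in> qd_tree r (z + s + leaves l) \<longleftrightarrow> q \<in> qd_tree r (z + leaves l)"
    using Node.IH(2)[of "z + leaves l"] by (simp add: ac_simps)
  then show ?case using Node.IH(1)[of z] by auto
qed simp

lemma del_out: "p \<notin> qd_tree t z \<Longrightarrow> del_tree t z p = t"
  by (induction t arbitrary: z) (auto split: if_splits)

lemma del_shift: "del_tree t (z + s) (p + s) = del_tree t z p"
proof (induction t arbitrary: z)
  case (Node l r)
  have "del_tree r (z + s + leaves l) (p + s) = del_tree r (z + leaves l) p"
    using Node.IH(2)[of "z + leaves l"] by (simp add: ac_simps)
  then show ?case using Node.IH(1)[of z] by auto
qed simp

lemma leaves_del: "p \<in> qd_tree t z \<Longrightarrow> Suc (leaves (del_tree t z p)) = leaves t"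
proof (induction t arbitrary: z)
  case (Node l r)
  show ?case
  proof (cases "l = Leaf \<and> r = Leaf")
    case True then show ?thesis using Node.prems by auto
  next
    case False
    then have d: "del_tree (Node l r) z p = Node (del_tree l z p) (del_tree r (z + leaves l) p)" by auto
    show ?thesis
    proof (cases "p \<in> qd_tree l z")
      case True
      then have "p \<notin> qd_tree r (z + leaves l)" using qd_range[OF True] qd_range[of p r] by force
      then show ?thesis using d Node.IH(1)[OF True] by (simp add: del_out)
    next
      case False
      then have pr: "p \<in> qd_tree r (z + leaves l)" using Node.prems \<open>\<not> (l = Leaf \<and> r = Leaf)\<close> by auto
      then show ?thesis using d Node.IH(2)[OF pr] False by (simp add: del_out)
    qed
  qed
qed simp

lemma ins_del: "p \<in> qd_tree t z \<Longrightarrow> ins (del_tree t z p) z p = t"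
proof (induction t arbitrary: z)
  case (Node l r)
  show ?case
  proof (cases "l = Leaf \<and> r = Leaf")
    case True then show ?thesis using Node.prems by (auto simp: elem_apply)
  next
    case False
    then have d: "del_tree (Node l r) z p = Node (del_tree l z p) (del_tree r (z + leaves l) p)" by auto
    show ?thesis
    proof (cases "p \<in> qd_tree l z")
      case True
      then have pr: "p \<notin> qd_tree r (z + leaves l)" using qd_range[OF True] qd_range[of p r] by force
      have "Suc (leaves (del_tree l z p)) = leaves l" by (rule leaves_del[OF True])
      moreover have "ins r (z + leaves l) p = r" using qd_range[OF True] by (intro ins_out) auto
      moreover have "ins r (z + leaves (del_tree l z p)) p = r"
        using qd_range[OF True] \<open>Suc (leaves (del_tree l z p)) = leaves l\<close> by (intro ins_out) auto
      ultimately show ?thesis using d Node.IH(1)[OF True] pr by (simp add: del_out)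
    next
      case False
      then have pr: "p \<in> qd_tree r (z + leaves l)" using Node.prems \<open>\<not> (l = Leaf \<and> r = Leaf)\<close> by auto
      have "ins l z p = l" using qd_range[OF pr] by (intro ins_out) auto
      then show ?thesis using d Node.IH(2)[OF pr] False by (simp add: del_out)
    qed
  qed
qed simp

lemma del_ins: "z \<le> i \<Longrightarrow> i < z + leaves t \<Longrightarrow> del_tree (ins t z i) z i = t \<and> i \<in> qd_tree (ins t z i) z"
proof (induction t arbitrary: z)
  case Leaf then show ?case by (auto simp: elem_apply)
next
  case (Node l r)
  have nt: "\<not> (ins l z i = Leaf \<and> ins r (z + leaves l) i = Leaf)"
  proof
    assume a: "ins l z i = Leaf \<and> ins r (z + leaves l) i = Leaf"
    then have "leaves (ins l z i) = 1" "leaves (ins r (z + leaves l) i) = 1" by auto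
    then show False using Node.prems leaves_ins[of l z i] leaves_ins[of r "z + leaves l" i] leaves_pos[of l] leaves_pos[of r]
      by (auto split: if_splits)
  qed
  show ?case
  proof (cases "i < z + leaves l")
    case True
    have r: "ins r (z + leaves l) i = r" using True by (intro ins_out) auto
    have ll: "leaves (ins l z i) = leaves l + 1" using True Node.prems by (simp add: leaves_ins)
    have "i \<notin> qd_tree r (z + leaves l + 1)" using True qd_range[of i r "z + leaves l + 1"] by auto
    moreover have "ins l z i \<noteq> Leaf"
    proof
      assume "ins l z i = Leaf"
      then have "leaves (ins l z i) = 1" by simp
      with ll leaves_pos[of l] show False by simp
    qed
    ultimately show ?thesis using Node.IH(1)[of z] True Node.prems nt r ll by (simp add: del_out)
  next
    case False
    have l: "ins l z i = l" using False by (intro ins_out) auto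
    have "i \<notin> qd_tree l z" using False qd_range[of i l z] by auto
    moreover have "z \<noteq> i" using False leaves_pos[of l] by linarith
    ultimately show ?thesis using Node.IH(2)[of "z + leaves l"] False Node.prems nt l by (simp add: del_out)
  qed
qed

lemma del_node: "\<not> (a = Leaf \<and> b = Leaf) \<Longrightarrow> del_tree (Node a b) z x = Node (del_tree a z x) (del_tree b (z + leaves a) x)"
  by auto

lemma qd_node_l: "q \<in> qd_tree a z \<Longrightarrow> q \<in> qd_tree (Node a b) z" by auto
lemma qd_node_r: "q \<in> qd_tree b (z + leaves a) \<Longrightarrow> q \<in> qd_tree (Node a b) z" by auto

lemma qd_del_two:
  "p \<in> qd_tree t z \<Longrightarrow> q \<in> qd_tree t z \<Longrightarrow> p < q \<Longrightarrow>
    q - 1 \<in> qd_tree (del_tree t z p) z \<and> p \<in> qd_tree (del_tree t z q) z \<and>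
    del_tree (del_tree t z p) z (q - 1) = del_tree (del_tree t z q) z p"
proof (induction t arbitrary: z)
  case (Node l r)
  have sep: "Suc p < q" by (rule qd_sep[OF Node.prems])
  show ?case
  proof (cases "l = Leaf \<and> r = Leaf")
    case True then show ?thesis using Node.prems by auto
  next
    case nt: False
    have dp: "del_tree (Node l r) z p = Node (del_tree l z p) (del_tree r (z + leaves l) p)"
     and dq: "del_tree (Node l r) z q = Node (del_tree l z q) (del_tree r (z + leaves l) q)"
      by (rule del_node[OF nt])+
    have pq: "p \<in> qd_tree l z \<union> qd_tree r (z + leaves l)" "q \<in> qd_tree l z \<union> qd_tree r (z + leaves l)"
      using Node.prems nt by auto
    show ?thesis
    proof (cases "p \<in> qd_tree l z")
      case pl: True
      have pr: "p \<notin> qd_tree r (z + leaves l)" using qd_range[OF pl] qd_range[of p r] by force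
      have lp: "Suc (leaves (del_tree l z p)) = leaves l" by (rule leaves_del[OF pl])
      show ?thesis
      proof (cases "q \<in> qd_tree l z")
        case ql: True
        have qr: "q \<notin> qd_tree r (z + leaves l)" using qd_range[OF ql] qd_range[of q r] by force
        have lq: "Suc (leaves (del_tree l z q)) = leaves l" by (rule leaves_del[OF ql])
        have IH: "q - 1 \<in> qd_tree (del_tree l z p) z \<and> p \<in> qd_tree (del_tree l z q) z \<and>
           del_tree (del_tree l z p) z (q - 1) = del_tree (del_tree l z q) z p"
          using Node.IH(1)[OF pl ql Node.prems(3)] .
        have dp': "del_tree (Node l r) z p = Node (del_tree l z p) r" using dp pr by (simp add: del_out)
        have dq': "del_tree (Node l r) z q = Node (del_tree l z q) r" using dq qr by (simp add: del_out)
        have ntp: "\<not> (del_tree l z p = Leaf \<and> r = Leaf)" using IH by auto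
        have ntq: "\<not> (del_tree l z q = Leaf \<and> r = Leaf)" using IH by auto
        have r1: "q - 1 \<notin> qd_tree r (z + leaves (del_tree l z p))"
          using qd_range[OF ql] qd_range[of "q - 1" r "z + leaves (del_tree l z p)"] lp by auto
        have r2: "p \<notin> qd_tree r (z + leaves (del_tree l z q))"
          using qd_range[OF pl] qd_range[of p r "z + leaves (del_tree l z q)"] lq sep by auto
        show ?thesis
          unfolding dp' dq' del_node[OF ntp] del_node[OF ntq]
          apply (intro conjI)
            apply (rule qd_node_l) using IH apply blast
           apply (rule qd_node_l) using IH apply blast
          using IH r1 r2 by (simp add: del_out)
      next
        case ql: False
        then have qr: "q \<in> qd_tree r (z + leaves l)" using pq by auto
        have dp': "del_tree (Node l r) z p = Node (del_tree l z p) r" using dp pr by (simp add: del_out)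
        have dq': "del_tree (Node l r) z q = Node l (del_tree r (z + leaves l) q)" using dq ql by (simp add: del_out)
        have ntp: "\<not> (del_tree l z p = Leaf \<and> r = Leaf)" using qr by auto
        have ntq: "\<not> (l = Leaf \<and> del_tree r (z + leaves l) q = Leaf)" using pl by auto
        have e: "z + leaves (del_tree l z p) + 1 = z + leaves l" using lp by simp
        have q1: "q - 1 + 1 = q" using qd_range[OF qr] leaves_pos[of l] by linarith
        have a: "q - 1 \<in> qd_tree r (z + leaves (del_tree l z p))"
          using qd_shift[of "q - 1" 1 r "z + leaves (del_tree l z p)"] qr unfolding e q1 by simp
        have b: "del_tree r (z + leaves (del_tree l z p)) (q - 1) = del_tree r (z + leaves l) q"
          using del_shift[of r "z + leaves (del_tree l z p)" 1 "q - 1"] unfolding e q1 by simp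
        have c: "q - 1 \<notin> qd_tree (del_tree l z p) z"
          using qd_range[of "q - 1" "del_tree l z p" z] qd_range[OF qr] lp by auto
        have d: "p \<notin> qd_tree (del_tree r (z + leaves l) q) (z + leaves l)"
          using qd_range[of p "del_tree r (z + leaves l) q" "z + leaves l"] qd_range[OF pl] by auto
        show ?thesis
          unfolding dp' dq' del_node[OF ntp] del_node[OF ntq]
          apply (intro conjI)
            apply (rule qd_node_r) using a apply blast
           apply (rule qd_node_l) using pl apply blast
          using b c d by (simp add: del_out)
      qed
    next
      case pl: False
      then have pr: "p \<in> qd_tree r (z + leaves l)" using pq by auto
      have ql: "q \<notin> qd_tree l z" using qd_range[OF pr] qd_range[of q l z] Node.prems(3) by auto
      then have qr: "q \<in> qd_tree r (z + leaves l)" using pq by auto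
      have IH: "q - 1 \<in> qd_tree (del_tree r (z + leaves l) p) (z + leaves l) \<and> p \<in> qd_tree (del_tree r (z + leaves l) q) (z + leaves l) \<and>
           del_tree (del_tree r (z + leaves l) p) (z + leaves l) (q - 1) = del_tree (del_tree r (z + leaves l) q) (z + leaves l) p"
        using Node.IH(2)[OF pr qr Node.prems(3)] .
      have dp': "del_tree (Node l r) z p = Node l (del_tree r (z + leaves l) p)" using dp pl by (simp add: del_out)
      have dq': "del_tree (Node l r) z q = Node l (del_tree r (z + leaves l) q)" using dq ql by (simp add: del_out)
      have ntp: "\<not> (l = Leaf \<and> del_tree r (z + leaves l) p = Leaf)" using IH by auto
      have ntq: "\<not> (l = Leaf \<and> del_tree r (z + leaves l) q = Leaf)" using IH by auto
      have c: "q - 1 \<notin> qd_tree l z"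
        using qd_range[OF pr] qd_range[of "q - 1" l z] sep by auto
      show ?thesis
        unfolding dp' dq' del_node[OF ntp] del_node[OF ntq]
        apply (intro conjI)
          apply (rule qd_node_r) using IH apply blast
         apply (rule qd_node_r) using IH apply blast
        using IH pl c by (simp add: del_out)
    qed
  qed
qed simp


lemma off_0[simp]: "off F 0 = 0" by (simp add: off_def)
lemma off_Suc: "off F (Suc k) = off F k + leaves (F k)" by (simp add: off_def)

lemma off_mono: "k \<le> k' \<Longrightarrow> off F k \<le> off F k'"
  by (induction k' rule: dec_induct) (auto simp: off_Suc)

lemma off_lt: "k < k' \<Longrightarrow> off F (Suc k) \<le> off F k'"
  using off_mono[of "Suc k" k'] by simp

lemma off_ge: "k \<le> off F k"
proof (induction k)
  case (Suc k) show ?case unfolding off_Suc using Suc leaves_pos[of "F k"] by linarith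
qed simp

lemma loc_ex: "\<exists>k. off F k \<le> i \<and> i < off F (Suc k)"
proof -
  let ?S = "{k. off F k \<le> i}"
  have fin: "finite ?S"
  proof (rule finite_subset[of _ "{..i}"])
    show "?S \<subseteq> {..i}" using off_ge[of _ F] le_trans by blast
  qed simp
  have "0 \<in> ?S" by simp
  then have m: "Max ?S \<in> ?S" using fin by (intro Max_in) blast+
  have "\<not> off F (Suc (Max ?S)) \<le> i"
  proof
    assume "off F (Suc (Max ?S)) \<le> i"
    then have "Suc (Max ?S) \<le> Max ?S" using fin by (intro Max_ge) auto
    then show False by simp
  qed
  then show ?thesis using m by (intro exI[of _ "Max ?S"]) auto
qed

lemma loc_unique: "off F k \<le> i \<Longrightarrow> i < off F (Suc k) \<Longrightarrow> off F k' \<le> i \<Longrightarrow> i < off F (Suc k') \<Longrightarrow> k = k'"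
proof (rule ccontr)
  assume a: "off F k \<le> i" "i < off F (Suc k)" "off F k' \<le> i" "i < off F (Suc k')" "k \<noteq> k'"
  then consider "k < k'" | "k' < k" by linarith
  then show False
  proof cases
    case 1 then show False using off_lt[OF 1, of F] a by linarith
  next
    case 2 then show False using off_lt[OF 2, of F] a by linarith
  qed
qed

lemma qd_loc: "i \<in> qd_tree (F k) (off F k) \<Longrightarrow> off F k \<le> i \<and> Suc i < off F (Suc k)"
  using qd_range[of i "F k" "off F k"] by (simp add: off_Suc)

lemma qd_unique: "i \<in> qd_tree (F k) (off F k) \<Longrightarrow> i \<in> qd_tree (F k') (off F k') \<Longrightarrow> k = k'"
  using qd_loc[of i F k] qd_loc[of i F k'] loc_unique[of F k i k'] by auto

lemma Qdes_iff: "i \<in> Qdes F \<longleftrightarrow> (\<exists>k. i \<in> qd_tree (F k) (off F k))"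
  by (simp add: Qdes_def)

lemma off_change:
  assumes "\<And>k. k \<noteq> k0 \<Longrightarrow> G k = F k" "leaves (G k0) = Suc (leaves (F k0))"
  shows "off G k = (if k \<le> k0 then off F k else Suc (off F k))"
proof (induction k)
  case (Suc k)
  show ?case
  proof (cases "Suc k \<le> k0")
    case True then show ?thesis using Suc assms(1)[of k] by (simp add: off_Suc)
  next
    case False
    then consider "k = k0" | "k > k0" by linarith
    then show ?thesis
    proof cases
      case 1 then show ?thesis using Suc assms(2) by (simp add: off_Suc)
    next
      case 2 then show ?thesis using Suc assms(1)[of k] by (simp add: off_Suc)
    qed
  qed
qed simp

lemma fdel_struct:
  assumes "i \<in> qd_tree (F k0) (off F k0)"
  shows "fdel F i k = (if k = k0 then del_tree (F k0) (off F k0) i else F k)"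
proof (cases "k = k0")
  case False
  then have "i \<notin> qd_tree (F k) (off F k)" using qd_unique[OF assms] by blast
  then show ?thesis using False by (simp add: fdel_def del_out)
qed (simp add: fdel_def)

lemma fdel_off:
  assumes "i \<in> qd_tree (F k0) (off F k0)"
  shows "off F k = (if k \<le> k0 then off (fdel F i) k else Suc (off (fdel F i) k))"
  by (rule off_change) (auto simp: fdel_struct[OF assms] leaves_del[OF assms])

lemma fmult_struct:
  assumes "off H k0 \<le> i" "i < off H (Suc k0)"
  shows "fmult H (elem i) k = (if k = k0 then ins (H k0) (off H k0) i else H k)"
proof (cases "k = k0")
  case False
  have "\<not> (off H k \<le> i \<and> i < off H k + leaves (H k))"
    using loc_unique[OF assms, of k] False by (auto simp: off_Suc)
  then show ?thesis using False by (simp add: fmult_def ins_out)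
qed (simp add: fmult_def)

lemma fmult_off:
  assumes "off H k0 \<le> i" "i < off H (Suc k0)"
  shows "off (fmult H (elem i)) k = (if k \<le> k0 then off H k else Suc (off H k))"
  by (rule off_change) (use assms in \<open>auto simp: fmult_struct[OF assms] leaves_ins off_Suc\<close>)

lemma Qdes_fmult: "i \<in> Qdes (fmult H (elem i)) \<and> fdel (fmult H (elem i)) i = H"
proof -
  obtain k0 where k0: "off H k0 \<le> i" "i < off H (Suc k0)" using loc_ex by blast
  let ?G = "fmult H (elem i)"
  have G0: "?G k0 = ins (H k0) (off H k0) i" using fmult_struct[OF k0] by simp
  have o0: "off ?G k0 = off H k0" using fmult_off[OF k0] by simp
  have r: "off H k0 \<le> i \<and> i < off H k0 + leaves (H k0)" using k0 by (simp add: off_Suc)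
  have q: "i \<in> qd_tree (?G k0) (off ?G k0)" using del_ins[of "off H k0" i "H k0"] r G0 o0 by simp
  have "fdel ?G i = H"
  proof
    fix k show "fdel ?G i k = H k"
    proof (cases "k = k0")
      case True
      then show ?thesis using fdel_struct[OF q, of k] G0 o0 del_ins[of "off H k0" i "H k0"] r by simp
    next
      case False
      then show ?thesis using fdel_struct[OF q, of k] fmult_struct[OF k0, of k] by simp
    qed
  qed
  then show ?thesis using q Qdes_iff by blast
qed

lemma fmult_fdel: assumes "i \<in> Qdes F" shows "fmult (fdel F i) (elem i) = F"
proof -
  obtain k0 where q: "i \<in> qd_tree (F k0) (off F k0)" using assms Qdes_iff by blast
  let ?G = "fdel F i"
  have o0: "off ?G k0 = off F k0" using fdel_off[OF q, of k0] by simp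
  have o1: "off F (Suc k0) = Suc (off ?G (Suc k0))" using fdel_off[OF q, of "Suc k0"] by simp
  have k0: "off ?G k0 \<le> i" "i < off ?G (Suc k0)" using qd_loc[OF q] o0 o1 by auto
  show ?thesis
  proof
    fix k show "fmult ?G (elem i) k = F k"
    proof (cases "k = k0")
      case True
      then show ?thesis using fmult_struct[OF k0, of k] fdel_struct[OF q, of k] o0 ins_del[OF q] by simp
    next
      case False
      then show ?thesis using fmult_struct[OF k0, of k] fdel_struct[OF q, of k] by simp
    qed
  qed
qed

lemma fdel_two:
  assumes ij: "i < j" and qi: "i \<in> Qdes F" and qj: "j \<in> Qdes F"
  shows "Suc i < j \<and> j - 1 \<in> Qdes (fdel F i) \<and> i \<in> Qdes (fdel F j) \<and> fdel (fdel F i) (j - 1) = fdel (fdel F j) i"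
proof -
  obtain ki where ki: "i \<in> qd_tree (F ki) (off F ki)" using qi Qdes_iff by blast
  obtain kj where kj: "j \<in> qd_tree (F kj) (off F kj)" using qj Qdes_iff by blast
  have "ki \<le> kj"
  proof (rule ccontr)
    assume "\<not> ki \<le> kj"
    then have "off F (Suc kj) \<le> off F ki" by (intro off_lt) simp
    then show False using qd_loc[OF ki] qd_loc[OF kj] ij by linarith
  qed
  then consider "ki = kj" | "ki < kj" by linarith
  then show ?thesis
  proof cases
    case 1
    let ?z = "off F ki" and ?t = "F ki"
    have qi': "i \<in> qd_tree ?t ?z" and qj': "j \<in> qd_tree ?t ?z" using ki kj 1 by auto
    have T: "j - 1 \<in> qd_tree (del_tree ?t ?z i) ?z \<and> i \<in> qd_tree (del_tree ?t ?z j) ?z \<and>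
      del_tree (del_tree ?t ?z i) ?z (j - 1) = del_tree (del_tree ?t ?z j) ?z i"
      by (rule qd_del_two[OF qi' qj' ij])
    have sep: "Suc i < j" by (rule qd_sep[OF qi' qj' ij])
    have oi: "off (fdel F i) ki = ?z" using fdel_off[OF ki, of ki] by simp
    have oj: "off (fdel F j) ki = ?z" using fdel_off[OF kj, of ki] 1 by simp
    have m1: "j - 1 \<in> qd_tree (fdel F i ki) (off (fdel F i) ki)"
      using T oi fdel_struct[OF ki, of ki] by simp
    have m2: "i \<in> qd_tree (fdel F j ki) (off (fdel F j) ki)"
      using T oj fdel_struct[OF kj, of ki] 1 by simp
    have "fdel (fdel F i) (j - 1) = fdel (fdel F j) i"
    proof
      fix k show "fdel (fdel F i) (j - 1) k = fdel (fdel F j) i k"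
      proof (cases "k = ki")
        case True
        have a: "fdel (fdel F i) (j - 1) k = del_tree (del_tree ?t ?z i) ?z (j - 1)"
          using fdel_struct[OF m1, of k] fdel_struct[OF ki, of ki] oi True by simp
        have b: "fdel (fdel F j) i k = del_tree (del_tree ?t ?z j) ?z i"
          using fdel_struct[OF m2, of k] fdel_struct[OF kj, of ki] oj True 1 by simp
        show ?thesis using a b T by simp
      next
        case False
        then show ?thesis using fdel_struct[OF m1, of k] fdel_struct[OF m2, of k] fdel_struct[OF ki, of k] fdel_struct[OF kj, of k] 1
          by simp
      qed
    qed
    then show ?thesis using sep m1 m2 Qdes_iff by blast
  next
    case 2
    have sep: "Suc i < j" using qd_loc[OF ki] qd_loc[OF kj] off_lt[OF 2, of F] by linarith
    have oi: "off F kj = Suc (off (fdel F i) kj)" using fdel_off[OF ki, of kj] 2 by simp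
    have oj: "off (fdel F j) ki = off F ki" using fdel_off[OF kj, of ki] 2 by simp
    have Gj: "fdel F i kj = F kj" using fdel_struct[OF ki, of kj] 2 by simp
    have Gi: "fdel F j ki = F ki" using fdel_struct[OF kj, of ki] 2 by simp
    have j1: "j - 1 + 1 = j" using ij by simp
    have m1: "j - 1 \<in> qd_tree (fdel F i kj) (off (fdel F i) kj)"
      using qd_shift[of "j - 1" 1 "F kj" "off (fdel F i) kj"] kj oi Gj j1 by simp
    have m2: "i \<in> qd_tree (fdel F j ki) (off (fdel F j) ki)"
      using ki oj Gi by simp
    have ds: "del_tree (F kj) (off (fdel F i) kj) (j - 1) = del_tree (F kj) (off F kj) j"
      using del_shift[of "F kj" "off (fdel F i) kj" 1 "j - 1"] oi j1 by simp
    have "fdel (fdel F i) (j - 1) = fdel (fdel F j) i"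
    proof
      fix k show "fdel (fdel F i) (j - 1) k = fdel (fdel F j) i k"
      proof (cases "k = kj")
        case True
        then have "k \<noteq> ki" using 2 by simp
        then show ?thesis using fdel_struct[OF m1, of k] fdel_struct[OF m2, of k] fdel_struct[OF kj, of k] Gj ds True by simp
      next
        case nj: False
        show ?thesis
        proof (cases "k = ki")
          case True
          then show ?thesis using fdel_struct[OF m1, of k] fdel_struct[OF m2, of k] fdel_struct[OF ki, of k] Gi oj nj by simp
        next
          case False
          then show ?thesis using fdel_struct[OF m1, of k] fdel_struct[OF m2, of k] fdel_struct[OF ki, of k] fdel_struct[OF kj, of k] nj by simp
        qed
      qed
    qed
    then show ?thesis using sep m1 m2 Qdes_iff by blast
  qed
qed


lemma leaves_graft: "off G z + leaves (graft t z G) = off G (z + leaves t)"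
proof (induction t arbitrary: z)
  case Leaf then show ?case by (simp add: off_Suc)
next
  case (Node l r)
  have "off G z + leaves (graft (Node l r) z G) = (off G z + leaves (graft l z G)) + leaves (graft r (z + leaves l) G)"
    by simp
  also have "\<dots> = off G (z + leaves l + leaves r)" using Node.IH(1)[of z] Node.IH(2)[of "z + leaves l"] by simp
  finally show ?case by (simp add: add.assoc)
qed

lemma off_fmult: "off (fmult F G) k = off G (off F k)"
proof (induction k)
  case (Suc k)
  then show ?case using leaves_graft[of G "off F k" "F k"] by (simp add: off_Suc fmult_def)
qed simp

lemma graft_assoc: "graft (graft t z G) (off G z) H = graft t z (fmult G H)"
proof (induction t arbitrary: z)
  case Leaf then show ?case by (simp add: fmult_def)
next
  case (Node l r)
  then show ?case using leaves_graft[of G z l] by simp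
qed

lemma fmult_assoc: "fmult (fmult F G) H = fmult F (fmult G H)"
proof
  fix k show "fmult (fmult F G) H k = fmult F (fmult G H) k"
    by (simp add: fmult_def[of "fmult F G"] off_fmult) (simp add: fmult_def graft_assoc)
qed

lemma graft_empty: "graft t z empty_forest = t"
  by (induction t arbitrary: z) (auto simp: empty_forest_def)

lemma fmult_empty_right[simp]: "fmult F empty_forest = F"
  by (simp add: fmult_def graft_empty)

lemma off_empty[simp]: "off empty_forest k = k"
  by (simp add: off_def empty_forest_def)

lemma fmult_empty_left[simp]: "fmult empty_forest G = G"
proof
  fix k show "fmult empty_forest G k = G k" by (simp add: fmult_def) (simp add: empty_forest_def)
qed

lemma fprod_snoc: "fprod (w @ [i]) = fmult (fprod w) (elem i)"
  by (induction w) (auto simp: fmult_assoc)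

fun tsize :: "tree \<Rightarrow> nat" where
  "tsize Leaf = 0"
| "tsize (Node l r) = Suc (tsize l + tsize r)"

definition fsize :: "forest \<Rightarrow> nat" where
  "fsize F = (\<Sum>k\<in>{k. F k \<noteq> Leaf}. tsize (F k))"

lemma tsize_0_iff: "tsize t = 0 \<longleftrightarrow> t = Leaf"
  by (cases t) auto

lemma fsize_superset: "finite S \<Longrightarrow> {k. F k \<noteq> Leaf} \<subseteq> S \<Longrightarrow> fsize F = (\<Sum>k\<in>S. tsize (F k))"
  unfolding fsize_def by (rule sum.mono_neutral_left) auto

lemma fsize_change:
  assumes "is_forest F" "is_forest G" "\<And>k. k \<noteq> k0 \<Longrightarrow> G k = F k"
  shows "fsize G + tsize (F k0) = fsize F + tsize (G k0)"
proof -
  let ?S = "insert k0 ({k. F k \<noteq> Leaf} \<union> {k. G k \<noteq> Leaf})"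
  have fin: "finite ?S" using assms(1,2) by (simp add: is_forest_def)
  have "fsize G = (\<Sum>k\<in>?S. tsize (G k))" by (rule fsize_superset[OF fin]) auto
  moreover have "fsize F = (\<Sum>k\<in>?S. tsize (F k))" by (rule fsize_superset[OF fin]) auto
  moreover have "(\<Sum>k\<in>?S. tsize (G k)) = tsize (G k0) + (\<Sum>k\<in>?S - {k0}. tsize (G k))"
    using fin by (rule sum.remove) simp
  moreover have "(\<Sum>k\<in>?S. tsize (F k)) = tsize (F k0) + (\<Sum>k\<in>?S - {k0}. tsize (F k))"
    using fin by (rule sum.remove) simp
  moreover have "(\<Sum>k\<in>?S - {k0}. tsize (G k)) = (\<Sum>k\<in>?S - {k0}. tsize (F k))"
    using assms(3) by (intro sum.cong) auto
  ultimately show ?thesis by simp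
qed

lemma tsize_ins: "z \<le> i \<Longrightarrow> i < z + leaves t \<Longrightarrow> tsize (ins t z i) = Suc (tsize t)"
proof (induction t arbitrary: z)
  case Leaf then show ?case by (simp add: elem_apply)
next
  case (Node l r)
  show ?case
  proof (cases "i < z + leaves l")
    case True
    then show ?thesis using Node by (simp add: ins_out)
  next
    case False
    then show ?thesis using Node by (simp add: ins_out)
  qed
qed

lemma tsize_del: "p \<in> qd_tree t z \<Longrightarrow> Suc (tsize (del_tree t z p)) = tsize t"
proof -
  assume p: "p \<in> qd_tree t z"
  have "z \<le> p" "p < z + leaves (del_tree t z p)" using qd_range[OF p] leaves_del[OF p] by auto
  then have "tsize (ins (del_tree t z p) z p) = Suc (tsize (del_tree t z p))" by (rule tsize_ins)
  then show ?thesis using ins_del[OF p] by simp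
qed

lemma is_forest_empty[simp]: "is_forest empty_forest"
  by (simp add: is_forest_def empty_forest_def)

lemma is_forest_fmult_elem: assumes "is_forest H" shows "is_forest (fmult H (elem i))"
proof -
  obtain k0 where k0: "off H k0 \<le> i" "i < off H (Suc k0)" using loc_ex by blast
  have "{k. fmult H (elem i) k \<noteq> Leaf} \<subseteq> insert k0 {k. H k \<noteq> Leaf}"
    using fmult_struct[OF k0] by auto
  then show ?thesis using assms unfolding is_forest_def by (meson finite_insert finite_subset)
qed

lemma is_forest_fdel: assumes "is_forest F" shows "is_forest (fdel F i)"
proof -
  have "{k. fdel F i k \<noteq> Leaf} \<subseteq> {k. F k \<noteq> Leaf}"
    by (auto simp: fdel_def)
  then show ?thesis using assms unfolding is_forest_def by (rule finite_subset)
qed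

lemma fsize_fmult_elem: assumes "is_forest H" shows "fsize (fmult H (elem i)) = Suc (fsize H)"
proof -
  obtain k0 where k0: "off H k0 \<le> i" "i < off H (Suc k0)" using loc_ex by blast
  have "fsize (fmult H (elem i)) + tsize (H k0) = fsize H + tsize (fmult H (elem i) k0)"
    by (rule fsize_change[OF assms is_forest_fmult_elem[OF assms]]) (simp add: fmult_struct[OF k0])
  moreover have "tsize (fmult H (elem i) k0) = Suc (tsize (H k0))"
    using k0 by (simp add: fmult_struct[OF k0] tsize_ins off_Suc)
  ultimately show ?thesis by simp
qed

lemma fsize_fdel: assumes "is_forest F" "i \<in> Qdes F" shows "Suc (fsize (fdel F i)) = fsize F"
proof -
  obtain k0 where q: "i \<in> qd_tree (F k0) (off F k0)" using assms(2) Qdes_iff by blast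
  have "fsize (fdel F i) + tsize (F k0) = fsize F + tsize (fdel F i k0)"
    by (rule fsize_change[OF assms(1) is_forest_fdel[OF assms(1)]]) (simp add: fdel_struct[OF q])
  moreover have "Suc (tsize (fdel F i k0)) = tsize (F k0)"
    using tsize_del[OF q] by (simp add: fdel_struct[OF q])
  ultimately show ?thesis by simp
qed

lemma is_forest_fprod: "is_forest (fprod w)"
  by (induction w rule: rev_induct) (auto simp: fprod_snoc is_forest_fmult_elem)

lemma fsize_fprod: "fsize (fprod w) = length w"
proof (induction w rule: rev_induct)
  case Nil then show ?case by (simp add: fsize_def empty_forest_def)
next
  case (snoc i w) then show ?case by (simp add: fprod_snoc fsize_fmult_elem is_forest_fprod)
qed

lemma fsize_0: "is_forest F \<Longrightarrow> fsize F = 0 \<Longrightarrow> F = empty_forest"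
  unfolding fsize_def is_forest_def empty_forest_def by (rule ext) (auto simp: tsize_0_iff)

lemma qd_nonempty: "t \<noteq> Leaf \<Longrightarrow> qd_tree t z \<noteq> {}"
proof (induction t arbitrary: z)
  case (Node l r) then show ?case by (cases l) auto
qed simp

lemma Qdes_nonempty: "F \<noteq> empty_forest \<Longrightarrow> Qdes F \<noteq> {}"
proof -
  assume "F \<noteq> empty_forest"
  then obtain k where "F k \<noteq> Leaf" by (auto simp: empty_forest_def)
  then show ?thesis using qd_nonempty[of "F k" "off F k"] by (auto simp: Qdes_def)
qed

lemma forest_fprod: "is_forest F \<Longrightarrow> \<exists>w. fprod w = F"
proof (induction "fsize F" arbitrary: F)
  case 0 then show ?case using fsize_0 by (intro exI[of _ "[]"]) auto
next
  case (Suc n)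
  then have "F \<noteq> empty_forest" by (auto simp: fsize_def empty_forest_def)
  then obtain i where i: "i \<in> Qdes F" using Qdes_nonempty by blast
  have "n = fsize (fdel F i)" using fsize_fdel[OF Suc.prems i] Suc.hyps by simp
  then obtain w where "fprod w = fdel F i" using Suc.hyps(1) is_forest_fdel[OF Suc.prems] by blast
  then have "fprod (w @ [i]) = F" by (simp add: fprod_snoc fmult_fdel[OF i])
  then show ?case by blast
qed

lemma fprod_snoc_iff: "fprod (w @ [i]) = F \<longleftrightarrow> i \<in> Qdes F \<and> fdel F i = fprod w"
  using Qdes_fmult[of i "fprod w"] fmult_fdel[of i F] by (auto simp: fprod_snoc)


section \<open>independence of the factorization\<close>

lemma star_ij: assumes "i < j" "finite B" shows "star {i} (star {j} B) = star {j - 1} (star {i} B)"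
proof -
  have a: "star {i} {j} = {i, j}" using assms by (auto simp: star_def cobar_single)
  have b: "star {j - 1} {i} = {i, j}" using assms by (auto simp: star_def cobar_single)
  have c: "star {i} (star {j} B) = star (star {i} {j}) B" using star_assoc[of "{j}" B "{i}"] assms(2) by simp
  have d: "star {j - 1} (star {i} B) = star (star {j - 1} {i}) B" using star_assoc[of "{i}" B "{j - 1}"] assms(2) by simp
  show ?thesis unfolding c d a b ..
qed

lemma length_fprod_eq: "fprod w = fprod w' \<Longrightarrow> length w = length w'"
  by (metis fsize_fprod)

lemma indep_step:
  assumes IH: "\<And>u u' B f. length u < length w \<Longrightarrow> finite B \<Longrightarrow> fprod u = fprod u' \<Longrightarrow> coefB B f u = coefB B f u'"
    and w: "w = u @ [i]" and w': "w' = u' @ [j]" and eq: "fprod w = fprod w'" and ij: "i < j" and B: "finite B"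
  shows "coefB B f w = coefB B f w'"
proof -
  let ?F = "fprod w"
  have qi: "i \<in> Qdes ?F" and di: "fdel ?F i = fprod u" using fprod_snoc_iff[of u i ?F] w by auto
  have qj: "j \<in> Qdes ?F" and dj: "fdel ?F j = fprod u'" using fprod_snoc_iff[of u' j ?F] w' eq by auto
  have T: "Suc i < j \<and> j - 1 \<in> Qdes (fdel ?F i) \<and> i \<in> Qdes (fdel ?F j) \<and> fdel (fdel ?F i) (j - 1) = fdel (fdel ?F j) i"
    by (rule fdel_two[OF ij qi qj])
  have "is_forest (fdel (fdel ?F i) (j - 1))" by (intro is_forest_fdel is_forest_fprod)
  then obtain v where v: "fprod v = fdel (fdel ?F i) (j - 1)" using forest_fprod by blast
  have u1: "fprod u = fprod (v @ [j - 1])"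
    using fmult_fdel[of "j - 1" "fdel ?F i"] T v di by (simp add: fprod_snoc)
  have u2: "fprod u' = fprod (v @ [i])"
    using fmult_fdel[of i "fdel ?F j"] T v dj by (simp add: fprod_snoc)
  have lu: "length u < length w" "length u' < length w" using w w' length_fprod_eq[OF eq] by auto
  have "coefB B f w = coefB (star {i} B) (EA i B f) u" by (simp add: w coefB_snoc)
  also have "\<dots> = coefB (star {i} B) (EA i B f) (v @ [j - 1])" using IH[OF lu(1) _ u1, of "star {i} B"] B by simp
  also have "\<dots> = coefB (star {j - 1} (star {i} B)) (EA (j - 1) (star {i} B) (EA i B f)) v" by (simp add: coefB_snoc)
  also have "\<dots> = coefB (star {i} (star {j} B)) (EA i (star {j} B) (EA j B f)) v"
    using EA_comm[OF B, of i j f] T star_ij[OF ij B] by simp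
  also have "\<dots> = coefB (star {j} B) (EA j B f) (v @ [i])" by (simp add: coefB_snoc)
  also have "\<dots> = coefB (star {j} B) (EA j B f) u'" using IH[OF lu(2) _ u2, of "star {j} B"] B by simp
  also have "\<dots> = coefB B f w'" by (simp add: w' coefB_snoc)
  finally show ?thesis .
qed

theorem coefB_indep: "finite B \<Longrightarrow> fprod w = fprod w' \<Longrightarrow> coefB B f w = coefB B f w'"
proof (induction "length w" arbitrary: w w' B f rule: less_induct)
  case less
  show ?case
  proof (cases w rule: rev_cases)
    case Nil
    then have "w' = []" using length_fprod_eq[OF less.prems(2)] by simp
    then show ?thesis using Nil by simp
  next
    case (snoc u i)
    obtain u' j where w': "w' = u' @ [j]"
      using length_fprod_eq[OF less.prems(2)] snoc by (cases w' rule: rev_cases) auto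
    consider "i = j" | "i < j" | "j < i" by linarith
    then show ?thesis
    proof cases
      case 1
      have "fprod u = fprod u'"
        using fprod_snoc_iff[of u i "fprod w"] fprod_snoc_iff[of u' j "fprod w"] snoc w' less.prems(2) 1 by auto
      then have "coefB (star {i} B) (EA i B f) u = coefB (star {i} B) (EA i B f) u'"
        using less.hyps[of u] snoc less.prems(1) by simp
      then show ?thesis using snoc w' 1 by (simp add: coefB_snoc)
    next
      case 2
      show ?thesis by (rule indep_step[OF _ snoc w' less.prems(2) 2 less.prems(1)]) (rule less.hyps; simp)
    next
      case 3
      have "coefB B f w' = coefB B f w"
      proof (rule indep_step[OF _ w' snoc less.prems(2)[symmetric] 3 less.prems(1)])
        fix u1 u2 and B' :: "nat set" and f' assume "length u1 < length w'" "finite B'" "fprod u1 = fprod u2"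
        then show "coefB B' f' u1 = coefB B' f' u2"
          using less.hyps[of u1] length_fprod_eq[OF less.prems(2)] by simp
      qed
      then show ?thesis by simp
    qed
  qed
qed

definition fcoef :: "poly \<Rightarrow> forest \<Rightarrow> poly" where
  "fcoef f F = coefB {} f (SOME w. fprod w = F)"

lemma fcoef_fprod: "fcoef f (fprod w) = coefB {} f w"
proof -
  have "fprod (SOME w'. fprod w' = fprod w) = fprod w" by (rule someI) simp
  then show ?thesis unfolding fcoef_def by (rule coefB_indep[rotated]) simp
qed

section \<open>families and dual bases\<close>

lemma evA_empty_ev_tt: "evA {} f = ev_tt f"
proof -
  have "(\<lambda>v. case v of X j \<Rightarrow> tA j {} | T j \<Rightarrow> pvar (T j)) = (\<lambda>v. case v of X j \<Rightarrow> pvar (T j) | T j \<Rightarrow> pvar (T j))"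
    by (rule ext) (auto split: var.split simp: tA_eq cobar_empty)
  then show ?thesis by (simp add: evA_def ev_tt_def)
qed

lemma rl_const: "rl B (if P then 1 else 0) = (if P then 1 else 0)"
  by (simp add: rl_def)

lemma star_single_emp: "star {i} {} = {i}" by (rule star_single_empty)

lemma family_dual:
  assumes fam: "dfp_family P" and F: "is_forest F"
  shows "coefB {} (P F) w = (if fprod w = F then 1 else 0)"
  using F
proof (induction w arbitrary: F rule: rev_induct)
  case Nil
  have "coefB {} (P F) [] = ev_tt (P F)" by (simp add: coefB_Nil evA_empty_ev_tt)
  also have "\<dots> = (if F = empty_forest then 1 else 0)" using fam Nil unfolding dfp_family_def by blast
  finally show ?case by auto
next
  case (snoc i u)
  have E: "EA i {} (P F) = (if i \<in> Qdes F then hat_t i (P (fdel F i)) else 0)"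
    using fam snoc.prems unfolding dfp_family_def by blast
  have "coefB {} (P F) (u @ [i]) = coefB {i} (EA i {} (P F)) u" by (simp add: coefB_snoc star_single_emp)
  also have "\<dots> = (if fprod (u @ [i]) = F then 1 else 0)"
  proof (cases "i \<in> Qdes F")
    case True
    have "coefB {i} (EA i {} (P F)) u = rl {i} (coefB {} (P (fdel F i)) u)"
      using E True by (simp add: hat_t_rl coefB_rl)
    also have "\<dots> = (if fprod u = fdel F i then 1 else 0)"
      using snoc.IH[OF is_forest_fdel[OF snoc.prems]] rl_const by simp
    finally show ?thesis using True fprod_snoc_iff[of u i F] by auto
  next
    case False
    then show ?thesis using E fprod_snoc_iff[of u i F] by simp
  qed
  finally show ?case .
qed

lemma family_unique:
  assumes "dfp_family P" "dfp_family Q" shows "P = Q"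
proof
  fix F show "P F = Q F"
  proof (cases "is_forest F")
    case True
    have "P F - Q F = 0"
    proof (rule coefB_inj[of "{}"])
      fix w show "coefB {} (P F - Q F) w = 0"
        using family_dual[OF assms(1) True] family_dual[OF assms(2) True] by (simp add: coefB_diff)
    qed
    then show ?thesis by simp
  next
    case False then show ?thesis using assms unfolding dfp_family_def by simp
  qed
qed

lemma homogeneous_hom: "hom d f \<Longrightarrow> homogeneous f"
  by (simp add: hom_def homogeneous_def)

lemma dual_family:
  assumes dual: "\<And>F w. is_forest F \<Longrightarrow> coefB {} (P F) w = (if fprod w = F then 1 else 0)"
    and h: "\<And>F. is_forest F \<Longrightarrow> hom (fsize F) (P F)"
    and nf: "\<And>F. \<not> is_forest F \<Longrightarrow> P F = 0"
  shows "dfp_family P"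
  unfolding dfp_family_def
proof (intro conjI allI impI)
  fix F assume F: "is_forest F"
  show "homogeneous (P F)" using h[OF F] by (rule homogeneous_hom)
  show "ev_tt (P F) = (if F = empty_forest then 1 else 0)"
    using dual[OF F, of "[]"] by (simp add: coefB_Nil evA_empty_ev_tt eq_commute)
next
  fix F i assume F: "is_forest F"
  show "EA i {} (P F) = (if i \<in> Qdes F then hat_t i (P (fdel F i)) else 0)"
  proof (cases "i \<in> Qdes F")
    case True
    have "EA i {} (P F) - hat_t i (P (fdel F i)) = 0"
    proof (rule coefB_inj[of "{i}"])
      fix u
      have "coefB {i} (EA i {} (P F)) u = (if fprod (u @ [i]) = F then 1 else 0)"
        using dual[OF F, of "u @ [i]"] by (simp add: coefB_snoc star_single_emp)
      moreover have "coefB {i} (hat_t i (P (fdel F i))) u = (if fprod u = fdel F i then 1 else 0)"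
        using dual[OF is_forest_fdel[OF F, of i], of u] by (simp add: hat_t_rl coefB_rl rl_const)
      ultimately show "coefB {i} (EA i {} (P F) - hat_t i (P (fdel F i))) u = 0"
        using True fprod_snoc_iff[of u i F] by (simp add: coefB_diff)
    qed
    then show ?thesis using True by simp
  next
    case False
    have "EA i {} (P F) = 0"
    proof (rule coefB_inj[of "{i}"])
      fix u show "coefB {i} (EA i {} (P F)) u = 0"
        using dual[OF F, of "u @ [i]"] False fprod_snoc_iff[of u i F] by (simp add: coefB_snoc star_single_emp)
    qed
    then show ?thesis using False by simp
  qed
qed (simp add: nf)


section \<open>monomials and the specialisation t = 0\<close>

definition mono :: "nat multiset \<Rightarrow> poly" where
  "mono M = prod_mset (image_mset xv M)"

lemma mono_empty[simp]: "mono {#} = 1" by (simp add: mono_def)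
lemma mono_add[simp]: "mono (add_mset a M) = xv a * mono M" by (simp add: mono_def)

lemma subst_prod_mset: "subst \<sigma> (prod_mset (image_mset g M)) = prod_mset (image_mset (\<lambda>a. subst \<sigma> (g a)) M)"
  by (induction M) auto

lemma subst_mono: "subst \<sigma> (mono M) = prod_mset (image_mset (\<lambda>a. \<sigma> (X a)) M)"
  unfolding mono_def subst_prod_mset by simp

lemma hom_mono: "hom (size M) (mono M)"
proof (induction M)
  case empty then show ?case by (simp add: hom_one)
next
  case (add a M) then show ?case using hom_mult[OF hom_pvar add] by simp
qed

lemma pconst_1: "pconst 1 = 1"
  unfolding pconst_def by (rule poly_mapping_eqI) (simp add: lookup_one lookup_single)

lemma pconst_0: "pconst 0 = 0"
  unfolding pconst_def by simp

lemma pconst_times: "pconst a * pconst b = pconst (a * b)"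
  unfolding pconst_def by (simp add: mult_single)

lemma pconst_uminus: "- pconst a = pconst (- a)"
  unfolding pconst_def by (simp add: single_uminus)

lemma pconst_inj: "pconst a = pconst b \<Longrightarrow> a = b"
  unfolding pconst_def by (metis lookup_single_eq)

definition zs :: "poly \<Rightarrow> poly" where
  "zs = subst (\<lambda>v. case v of X j \<Rightarrow> xv j | T j \<Rightarrow> 0)"

definition zz :: "poly \<Rightarrow> poly" where
  "zz = subst (\<lambda>v. 0)"

lemma zs_mono: "zs (mono M) = mono M"
  unfolding zs_def subst_mono by (simp add: mono_def)

lemma zs_pconst[simp]: "zs (pconst c) = pconst c" by (simp add: zs_def)

lemma zz_mono: "zz (mono M) = (if M = {#} then 1 else 0)"
  by (induction M) (auto simp: zz_def)

lemma zs_Rplus: "zs (Rplus i A f) = Rp i 0 (zs f)"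
  unfolding zs_def Rplus_def Rp_def subst_subst
  by (rule arg_cong[where f="\<lambda>s. subst s f"], rule ext) (auto split: var.split simp: tA_eq)

lemma zs_Rminus: "zs (Rminus i A f) = Rm i 0 (zs f)"
  unfolding zs_def Rminus_def Rm_def subst_subst
  by (rule arg_cong[where f="\<lambda>s. subst s f"], rule ext) (auto split: var.split simp: tA_eq)

lemma zs_EA: "xv i * zs (EA i A f) = Rp i 0 (zs f) - Rm i 0 (zs f)"
proof -
  have "zs ((xv i - tA i A) * EA i A f) = xv i * zs (EA i A f)" by (simp add: zs_def tA_eq)
  then show ?thesis using EA_eq[of i A f] by (simp add: zs_def zs_Rplus[unfolded zs_def] zs_Rminus[unfolded zs_def])
qed

lemma zs_evA: "zs (evA A f) = zz (zs f)"
  unfolding zs_def zz_def evA_def subst_subst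
  by (rule arg_cong[where f="\<lambda>s. subst s f"], rule ext) (auto split: var.split simp: tA_eq)

definition dn :: "nat \<Rightarrow> nat \<Rightarrow> nat" where
  "dn p a = (if p < a then a - 1 else a)"

lemma prod_sel: "prod_mset (image_mset (\<lambda>a. if a = p then 0 else xv (h a)) M) = (if p \<in># M then 0 else mono (image_mset h M))"
  by (induction M) auto

lemma Rp_mono: "Rp i 0 (mono M) = (if Suc i \<in># M then 0 else mono (image_mset (dn (Suc i)) M))"
proof -
  have "Rp i 0 (mono M) = prod_mset (image_mset (\<lambda>a. if a = Suc i then 0 else xv (dn (Suc i) a)) M)"
    unfolding Rp_def subst_mono by (rule arg_cong[where f=prod_mset], rule image_mset_cong) (auto simp: dn_def)
  then show ?thesis by (simp add: prod_sel)
qed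

lemma Rm_mono: "Rm i 0 (mono M) = (if i \<in># M then 0 else mono (image_mset (dn i) M))"
proof -
  have "Rm i 0 (mono M) = prod_mset (image_mset (\<lambda>a. if a = i then 0 else xv (dn i a)) M)"
    unfolding Rm_def subst_mono by (rule arg_cong[where f=prod_mset], rule image_mset_cong) (auto simp: dn_def)
  then show ?thesis by (simp add: prod_sel)
qed

definition Tm :: "nat \<Rightarrow> nat multiset \<Rightarrow> int \<times> nat multiset" where
  "Tm i M = (if i \<in># M \<and> Suc i \<notin># M then (1, image_mset (dn (Suc i)) (M - {#i#}))
             else if i \<notin># M \<and> Suc i \<in># M then (-1, image_mset (dn i) (M - {#Suc i#}))
             else (0, {#}))"

lemma Rp_mult0: "Rp i e (pconst c * g) = pconst c * Rp i e g" by (simp add: Rp_def)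
lemma Rm_mult0: "Rm i e (pconst c * g) = pconst c * Rm i e g" by (simp add: Rm_def)

lemma zs_EA_mono:
  assumes "zs f = pconst c * mono M"
  shows "zs (EA i A f) = pconst (c * fst (Tm i M)) * mono (snd (Tm i M))"
proof -
  let ?E = "zs (EA i A f)"
  have key: "xv i * ?E = pconst c * (Rp i 0 (mono M) - Rm i 0 (mono M))"
    using zs_EA[of i A f] assms by (simp add: Rp_mult0 Rm_mult0 right_diff_distrib)
  have xi: "xv i \<noteq> 0" by simp
  consider "i \<in># M \<and> Suc i \<notin># M" | "i \<notin># M \<and> Suc i \<in># M" | "i \<in># M \<and> Suc i \<in># M" | "i \<notin># M \<and> Suc i \<notin># M"
    by blast
  then show ?thesis
  proof cases
    case 1
    have "image_mset (dn (Suc i)) M = add_mset i (image_mset (dn (Suc i)) (M - {#i#}))"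
      using 1 by (metis (no_types, lifting) dn_def image_mset_add_mset insert_DiffM lessI less_SucI not_less_eq)
    then have "xv i * ?E = xv i * (pconst c * mono (image_mset (dn (Suc i)) (M - {#i#})))"
      using key 1 by (simp add: Rp_mono Rm_mono algebra_simps)
    then show ?thesis using 1 xi by (simp add: Tm_def pconst_1)
  next
    case 2
    have "image_mset (dn i) M = add_mset i (image_mset (dn i) (M - {#Suc i#}))"
      using 2 by (metis (no_types, lifting) dn_def image_mset_add_mset insert_DiffM lessI diff_Suc_1)
    then have "xv i * ?E = xv i * (pconst (- c) * mono (image_mset (dn i) (M - {#Suc i#})))"
      using key 2 by (simp add: Rp_mono Rm_mono algebra_simps pconst_uminus[symmetric])
    then show ?thesis using 2 xi by (simp add: Tm_def)
  next
    case 3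
    then have "xv i * ?E = 0" using key by (simp add: Rp_mono Rm_mono)
    then show ?thesis using 3 xi by (simp add: Tm_def pconst_0)
  next
    case 4
    have "image_mset (dn (Suc i)) M = image_mset (dn i) M"
    proof (rule image_mset_cong)
      fix x assume "x \<in># M"
      then have "x \<noteq> i" "x \<noteq> Suc i" using 4 by auto
      then show "dn (Suc i) x = dn i x" by (auto simp: dn_def)
    qed
    then have "xv i * ?E = 0" using key 4 by (simp add: Rp_mono Rm_mono)
    then show ?thesis using 4 xi by (simp add: Tm_def pconst_0)
  qed
qed

fun c0r :: "nat multiset \<Rightarrow> nat list \<Rightarrow> int" where
  "c0r M [] = (if M = {#} then 1 else 0)"
| "c0r M (i # ws) = fst (Tm i M) * c0r (snd (Tm i M)) ws"

definition c0 :: "nat multiset \<Rightarrow> nat list \<Rightarrow> int" where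
  "c0 M w = c0r M (rev w)"

lemma c0_Nil: "c0 M [] = (if M = {#} then 1 else 0)" by (simp add: c0_def)
lemma c0_snoc: "c0 M (u @ [i]) = fst (Tm i M) * c0 (snd (Tm i M)) u" by (simp add: c0_def)

lemma zs_coefB_mono:
  assumes "zs f = pconst c * mono M"
  shows "zs (coefB B f w) = pconst (c * c0 M w)"
  using assms
proof (induction w arbitrary: B f c M rule: rev_induct)
  case Nil
  have "zs (coefB B f []) = zz (pconst c * mono M)" by (simp add: coefB_Nil zs_evA Nil)
  also have "\<dots> = pconst c * (if M = {#} then 1 else 0)" by (simp add: zz_def zz_mono[unfolded zz_def])
  finally show ?case by (simp add: c0_Nil pconst_1 pconst_0)
next
  case (snoc i u)
  have "zs (coefB B f (u @ [i])) = zs (coefB (star {i} B) (EA i B f) u)" by (simp add: coefB_snoc)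
  also have "\<dots> = pconst (c * fst (Tm i M) * c0 (snd (Tm i M)) u)"
    using snoc.IH[OF zs_EA_mono[OF snoc.prems]] .
  finally show ?case by (simp add: c0_snoc mult.assoc)
qed

lemma coefB_mono: assumes "length w = size M" shows "coefB B (mono M) w = pconst (c0 M w)"
proof -
  have "hom 0 (coefB B (mono M) w)" using hom_coefB(1)[OF hom_mono[of M], of w B] assms by simp
  then obtain k where k: "coefB B (mono M) w = pconst k" using hom_zero_const by blast
  have "zs (coefB B (mono M) w) = pconst (1 * c0 M w)"
    by (rule zs_coefB_mono) (simp add: zs_mono pconst_1)
  then show ?thesis using k by simp
qed


fun rho_tree :: "tree \<Rightarrow> nat \<Rightarrow> nat multiset" where
  "rho_tree Leaf z = {#}"
| "rho_tree (Node l r) z = add_mset z (rho_tree l z + rho_tree r (z + leaves l))"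

definition rho :: "forest \<Rightarrow> nat multiset" where
  "rho F = (\<Sum>k\<in>{k. F k \<noteq> Leaf}. rho_tree (F k) (off F k))"

definition up :: "nat \<Rightarrow> nat \<Rightarrow> nat" where
  "up i a = (if i < a then Suc a else a)"

lemma rho_tree_range: "a \<in># rho_tree t z \<Longrightarrow> z \<le> a \<and> a < z + leaves t"
proof (induction t arbitrary: z)
  case (Node l r)
  then show ?case using leaves_pos[of l] leaves_pos[of r] by (auto; fastforce)
qed simp

lemma rho_tree_shift: "rho_tree t (z + s) = image_mset (\<lambda>a. a + s) (rho_tree t z)"
proof (induction t arbitrary: z)
  case (Node l r)
  have "rho_tree r (z + s + leaves l) = image_mset (\<lambda>a. a + s) (rho_tree r (z + leaves l))"
    using Node.IH(2)[of "z + leaves l"] by (simp add: ac_simps)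
  then show ?case using Node.IH(1)[of z] by simp
qed simp

lemma rho_tree_ins: "z \<le> i \<Longrightarrow> i < z + leaves t \<Longrightarrow> rho_tree (ins t z i) z = add_mset i (image_mset (up i) (rho_tree t z))"
proof (induction t arbitrary: z)
  case Leaf then show ?case by (simp add: elem_apply)
next
  case (Node l r)
  have uz: "up i z = z" using Node.prems by (simp add: up_def)
  show ?case
  proof (cases "i < z + leaves l")
    case True
    have r: "ins r (z + leaves l) i = r" using True by (intro ins_out) auto
    have ll: "leaves (ins l z i) = Suc (leaves l)" using True Node.prems by (simp add: leaves_ins)
    have "rho_tree r (z + leaves l + 1) = image_mset (\<lambda>a. a + 1) (rho_tree r (z + leaves l))"
      by (rule rho_tree_shift)
    also have "\<dots> = image_mset (up i) (rho_tree r (z + leaves l))"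
      by (rule image_mset_cong) (use True rho_tree_range in \<open>force simp: up_def\<close>)
    finally have rr: "rho_tree r (z + leaves (ins l z i)) = image_mset (up i) (rho_tree r (z + leaves l))"
      using ll by simp
    show ?thesis using Node.IH(1)[of z] True Node.prems r rr uz by simp
  next
    case False
    have l: "ins l z i = l" using False by (intro ins_out) auto
    have "rho_tree l z = image_mset (up i) (rho_tree l z)"
      by (rule image_mset_cong[where g=id, simplified, symmetric]) (use False rho_tree_range in \<open>force simp: up_def\<close>)
    then show ?thesis using Node.IH(2)[of "z + leaves l"] False Node.prems l uz by simp
  qed
qed

lemma rho_tree_qd_bound: "a \<in># rho_tree t z \<Longrightarrow> \<exists>q\<in>qd_tree t z. a \<le> q"
proof (induction t arbitrary: z)
  case (Node l r)
  show ?case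
  proof (cases "a = z")
    case True
    show ?thesis
    proof (cases "l = Leaf \<and> r = Leaf")
      case True then show ?thesis using \<open>a = z\<close> by auto
    next
      case False
      then consider "l \<noteq> Leaf" | "r \<noteq> Leaf" by blast
      then show ?thesis
      proof cases
        case 1
        then obtain q where "q \<in> qd_tree l z" using qd_nonempty by blast
        then show ?thesis using qd_range[of q l z] \<open>a = z\<close> by (auto intro!: bexI[of _ q])
      next
        case 2
        then obtain q where "q \<in> qd_tree r (z + leaves l)" using qd_nonempty by blast
        then show ?thesis using qd_range[of q r "z + leaves l"] \<open>a = z\<close> by (auto intro!: bexI[of _ q])
      qed
    qed
  next
    case False
    then have "a \<in># rho_tree l z \<or> a \<in># rho_tree r (z + leaves l)" using Node.prems by auto
    then show ?thesis using Node.IH by fastforce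
  qed
qed simp

lemma qd_in_rho_tree: "q \<in> qd_tree t z \<Longrightarrow> q \<in># rho_tree t z"
  by (induction t arbitrary: z) (auto split: if_splits)

lemma size_rho_tree: "size (rho_tree t z) = tsize t"
  by (induction t arbitrary: z) auto

lemma rho_superset: "finite S \<Longrightarrow> {k. F k \<noteq> Leaf} \<subseteq> S \<Longrightarrow> rho F = (\<Sum>k\<in>S. rho_tree (F k) (off F k))"
  unfolding rho_def by (rule sum.mono_neutral_left) auto

lemma image_mset_sum: "finite S \<Longrightarrow> image_mset f (\<Sum>k\<in>S. g k) = (\<Sum>k\<in>S. image_mset f (g k))"
  by (induction S rule: finite_induct) auto

lemma rho_fmult: assumes H: "is_forest H"
  shows "rho (fmult H (elem i)) = add_mset i (image_mset (up i) (rho H))"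
proof -
  obtain k0 where k0: "off H k0 \<le> i" "i < off H (Suc k0)" using loc_ex by blast
  let ?G = "fmult H (elem i)"
  let ?S = "insert k0 {k. H k \<noteq> Leaf}"
  have fin: "finite ?S" using H by (simp add: is_forest_def)
  have supG: "{k. ?G k \<noteq> Leaf} \<subseteq> ?S" using fmult_struct[OF k0] by auto
  have rG: "rho ?G = (\<Sum>k\<in>?S. rho_tree (?G k) (off ?G k))" by (rule rho_superset[OF fin supG])
  have rH: "rho H = (\<Sum>k\<in>?S. rho_tree (H k) (off H k))" by (rule rho_superset[OF fin]) auto
  have each: "rho_tree (?G k) (off ?G k) = (if k = k0 then add_mset i (image_mset (up i) (rho_tree (H k) (off H k)))
               else image_mset (up i) (rho_tree (H k) (off H k)))" for k
  proof -
    consider "k < k0" | "k = k0" | "k0 < k" by linarith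
    then show ?thesis
    proof cases
      case 1
      have "rho_tree (H k) (off H k) = image_mset (up i) (rho_tree (H k) (off H k))"
      proof (rule image_mset_cong[where g=id, simplified, symmetric])
        fix a assume "a \<in># rho_tree (H k) (off H k)"
        then have "a < off H (Suc k)" using rho_tree_range by (force simp: off_Suc)
        moreover have "off H (Suc k) \<le> off H k0" using 1 off_mono[of "Suc k" k0 H] by simp
        ultimately show "up i a = a" using k0 by (simp add: up_def)
      qed
      then show ?thesis using 1 fmult_struct[OF k0, of k] fmult_off[OF k0, of k] by simp
    next
      case 2
      then show ?thesis using fmult_struct[OF k0, of k] fmult_off[OF k0, of k] k0 rho_tree_ins[of "off H k0" i "H k0"]
        by (simp add: off_Suc)
    next
      case 3
      have "rho_tree (H k) (Suc (off H k)) = image_mset (\<lambda>a. a + 1) (rho_tree (H k) (off H k))"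
        using rho_tree_shift[of "H k" "off H k" 1] by simp
      also have "\<dots> = image_mset (up i) (rho_tree (H k) (off H k))"
      proof (rule image_mset_cong)
        fix a assume "a \<in># rho_tree (H k) (off H k)"
        then have "off H k \<le> a" using rho_tree_range by force
        moreover have "off H (Suc k0) \<le> off H k" using 3 off_mono[of "Suc k0" k H] by simp
        ultimately show "a + 1 = up i a" using k0 by (simp add: up_def)
      qed
      finally show ?thesis using 3 fmult_struct[OF k0, of k] fmult_off[OF k0, of k] by simp
    qed
  qed
  have "rho ?G = (\<Sum>k\<in>?S. (if k = k0 then {#i#} else {#}) + image_mset (up i) (rho_tree (H k) (off H k)))"
    unfolding rG by (rule sum.cong) (auto simp: each)
  also have "\<dots> = {#i#} + (\<Sum>k\<in>?S. image_mset (up i) (rho_tree (H k) (off H k)))"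
    using fin by (simp add: sum.distrib)
  also have "\<dots> = add_mset i (image_mset (up i) (rho H))"
    unfolding rH using fin by (simp add: image_mset_sum)
  finally show ?thesis .
qed

lemma rho_empty[simp]: "rho empty_forest = {#}"
  by (simp add: rho_def empty_forest_def)

lemma size_rho: "is_forest F \<Longrightarrow> size (rho F) = fsize F"
  unfolding rho_def fsize_def is_forest_def
  by (induction "{k. F k \<noteq> Leaf}" rule: finite_induct) (auto simp: size_rho_tree)

lemma rho_mem: assumes "is_forest F" "a \<in># rho F" shows "\<exists>k. a \<in># rho_tree (F k) (off F k)"
proof -
  have "a \<in># (\<Sum>k\<in>{k. F k \<noteq> Leaf}. rho_tree (F k) (off F k))" using assms(2) by (simp add: rho_def)
  then show ?thesis using assms(1) unfolding is_forest_def by (auto simp: set_mset_sum)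
qed

lemma rho_Qdes_bound: assumes "is_forest F" "a \<in># rho F" shows "\<exists>q\<in>Qdes F. a \<le> q"
  using rho_mem[OF assms] rho_tree_qd_bound Qdes_iff by blast

lemma Qdes_in_rho: assumes "is_forest F" "q \<in> Qdes F" shows "q \<in># rho F"
proof -
  obtain k where k: "q \<in> qd_tree (F k) (off F k)" using assms(2) Qdes_iff by blast
  then have Fk: "F k \<noteq> Leaf" by auto
  have "q \<in># rho_tree (F k) (off F k)" using qd_in_rho_tree[OF k] .
  then show ?thesis using Fk assms(1) unfolding rho_def is_forest_def by (auto simp: set_mset_sum)
qed

lemma finite_Qdes: "is_forest F \<Longrightarrow> finite (Qdes F)"
  using Qdes_in_rho by (metis finite_set_mset finite_subset subsetI)

lemma peel:
  assumes F: "is_forest F" "F \<noteq> empty_forest"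
  shows "\<exists>q. q \<in> Qdes F \<and> (\<forall>a\<in>#rho F. a \<le> q) \<and> rho F = add_mset q (rho (fdel F q))"
proof -
  let ?q = "Max (Qdes F)"
  have ne: "Qdes F \<noteq> {}" using Qdes_nonempty[OF F(2)] .
  have q: "?q \<in> Qdes F" using Max_in[OF finite_Qdes[OF F(1)] ne] .
  have bnd: "\<forall>a\<in>#rho F. a \<le> ?q"
    using rho_Qdes_bound[OF F(1)] Max_ge[OF finite_Qdes[OF F(1)]] by (meson order.trans)
  have e: "rho F = add_mset ?q (image_mset (up ?q) (rho (fdel F ?q)))"
    using rho_fmult[OF is_forest_fdel[OF F(1), of "Max (Qdes F)"], of "Max (Qdes F)"] fmult_fdel[OF q] by simp
  have "image_mset (up ?q) (rho (fdel F ?q)) = rho (fdel F ?q)"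
  proof (rule image_mset_cong[where g=id, simplified])
    fix a assume "a \<in># rho (fdel F ?q)"
    then have "up ?q a \<in># rho F" using e by simp
    then have "up ?q a \<le> ?q" using bnd by blast
    then show "up ?q a = a" by (auto simp: up_def split: if_splits)
  qed
  then show ?thesis using q bnd e by (intro exI[of _ ?q]) simp
qed

section \<open>dominance\<close>

definition cb :: "nat \<Rightarrow> nat multiset \<Rightarrow> nat" where
  "cb m M = size (filter_mset (\<lambda>a. a < m) M)"

definition dom :: "nat multiset \<Rightarrow> nat multiset \<Rightarrow> bool" where
  "dom N M \<longleftrightarrow> (\<forall>m. cb m M \<le> cb m N)"

lemma cb_add: "cb m (add_mset x M) = (if x < m then Suc (cb m M) else cb m M)"
  by (simp add: cb_def)

lemma cb_diff: assumes "x \<in># M" shows "cb m (M - {#x#}) = (if x < m then cb m M - 1 else cb m M)"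
proof -
  have "cb m M = cb m (add_mset x (M - {#x#}))" using assms by (simp add: insert_DiffM)
  then show ?thesis by (simp add: cb_add)
qed

lemma size_filter_full: assumes "size (filter_mset P M) = size M" shows "\<forall>x\<in>#M. P x"
proof (rule ccontr)
  assume "\<not> (\<forall>x\<in>#M. P x)"
  then obtain x where x: "x \<in># M" "\<not> P x" by blast
  obtain M' where M: "M = add_mset x M'" using x(1) by (metis insert_DiffM)
  have "size (filter_mset P M) = size (filter_mset P M')" using M x(2) by simp
  also have "\<dots> \<le> size M'" by (rule size_filter_mset_lesseq)
  also have "\<dots> < size M" using M by simp
  finally show False using assms by simp
qed

lemma cb_le_size: "cb m M \<le> size M"
  by (simp add: cb_def size_filter_mset_lesseq)

lemma cb_all: assumes "\<forall>a\<in>#M. a < m" shows "cb m M = size M"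
proof -
  have "filter_mset (\<lambda>a. a < m) M = filter_mset (\<lambda>_. True) M" by (rule filter_mset_cong0) (use assms in auto)
  then show ?thesis by (simp add: cb_def)
qed

lemma cb_image: "cb m (image_mset f M) = size (filter_mset (\<lambda>a. f a < m) M)"
  by (induction M) (auto simp: cb_def)

lemma cb_image_cong: assumes "\<And>a. a \<in># M \<Longrightarrow> (f a < m \<longleftrightarrow> a < m)" shows "cb m (image_mset f M) = cb m M"
proof -
  have "filter_mset (\<lambda>a. f a < m) M = filter_mset (\<lambda>a. a < m) M" by (rule filter_mset_cong0) (rule assms)
  then show ?thesis by (simp only: cb_image) (simp add: cb_def)
qed

lemma dom_mu: "size N = size M \<Longrightarrow> dom N M \<Longrightarrow> sum_mset N \<le> sum_mset M \<and> (sum_mset N = sum_mset M \<longrightarrow> N = M)"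
proof (induction "size M" arbitrary: M N)
  case 0 then show ?case by simp
next
  case (Suc n)
  then have Mne: "M \<noteq> {#}" and Nne: "N \<noteq> {#}" by auto
  let ?a = "Max (set_mset M)" and ?b = "Max (set_mset N)"
  have a: "?a \<in># M" using Mne by simp
  have b: "?b \<in># N" using Nne by simp
  have aM: "\<forall>x\<in>#M. x \<le> ?a" by simp
  have bN: "\<forall>x\<in>#N. x \<le> ?b" by simp
  have "cb (Suc ?a) M = size M" using aM by (intro cb_all) (auto simp: less_Suc_eq_le)
  moreover have "cb (Suc ?a) M \<le> cb (Suc ?a) N" using Suc.prems(2) by (simp add: dom_def)
  ultimately have "size N \<le> cb (Suc ?a) N" using Suc.prems(1) by simp
  then have "cb (Suc ?a) N = size N" using cb_le_size[of "Suc ?a" N] by simp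
  then have "\<forall>x\<in>#N. x < Suc ?a"
    unfolding cb_def by (rule size_filter_full)
  then have ba: "?b \<le> ?a" using b by auto
  let ?M' = "M - {#?a#}" and ?N' = "N - {#?b#}"
  have sM: "size ?M' = n" using a Suc.hyps(2) by (simp add: size_Diff_submset)
  have sN: "size ?N' = n" using b Suc.hyps(2) Suc.prems(1) by (simp add: size_Diff_submset)
  have dom': "dom ?N' ?M'"
    unfolding dom_def
  proof
    fix m
    have d: "cb m M \<le> cb m N" using Suc.prems(2) by (simp add: dom_def)
    consider "m \<le> ?b" | "?b < m \<and> m \<le> ?a" | "?a < m" by linarith
    then show "cb m ?M' \<le> cb m ?N'"
    proof cases
      case 1 then show ?thesis using d ba by (simp add: cb_diff[OF a] cb_diff[OF b])
    next
      case 2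
      have "\<forall>x\<in>#N. x < m" using bN 2 by (meson le_less_trans)
      then have "cb m N = size N" by (rule cb_all)
      then have "cb m ?N' = n" using 2 Suc.hyps(2) Suc.prems(1) by (simp add: cb_diff[OF b])
      moreover have "cb m ?M' \<le> n" using cb_le_size[of m ?M'] sM by simp
      ultimately show ?thesis by simp
    next
      case 3 then show ?thesis using d ba by (simp add: cb_diff[OF a] cb_diff[OF b])
    qed
  qed
  have IH: "sum_mset ?N' \<le> sum_mset ?M' \<and> (sum_mset ?N' = sum_mset ?M' \<longrightarrow> ?N' = ?M')"
    using Suc.hyps(1)[of ?M' ?N'] sM sN dom' by simp
  have Ma: "M = add_mset ?a ?M'" using a by simp
  have Nb: "N = add_mset ?b ?N'" using b by simp
  have eM: "sum_mset M = ?a + sum_mset ?M'" using arg_cong[OF Ma, of sum_mset] by simp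
  have eN: "sum_mset N = ?b + sum_mset ?N'" using arg_cong[OF Nb, of sum_mset] by simp
  show ?case
  proof
    show "sum_mset N \<le> sum_mset M" using eM eN IH ba by simp
    show "sum_mset N = sum_mset M \<longrightarrow> N = M"
    proof
      assume "sum_mset N = sum_mset M"
      then have "?b = ?a" "?N' = ?M'" using eM eN IH ba by auto
      then show "N = M" using Ma Nb by simp
    qed
  qed
qed


lemma c0_indep: assumes "fprod w = fprod w'" "length w = size M" shows "c0 M w = c0 M w'"
proof -
  have l: "length w' = size M" using length_fprod_eq[OF assms(1)] assms(2) by simp
  have "pconst (c0 M w) = pconst (c0 M w')"
    using coefB_mono[OF assms(2), of "{}"] coefB_mono[OF l, of "{}"] coefB_indep[OF _ assms(1), of "{}" "mono M"] by simp
  then show ?thesis by (rule pconst_inj)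
qed

lemma fsize_empty[simp]: "fsize empty_forest = 0"
  by (simp add: fsize_def empty_forest_def)

lemma peel_word:
  assumes "w \<noteq> []"
  obtains q u where "q \<in> Qdes (fprod w)" "\<forall>a\<in>#rho (fprod w). a \<le> q"
    "rho (fprod w) = add_mset q (rho (fdel (fprod w) q))" "fprod u = fdel (fprod w) q"
    "fprod (u @ [q]) = fprod w" "length (u @ [q]) = length w"
proof -
  have G: "is_forest (fprod w)" by (rule is_forest_fprod)
  have "fprod w \<noteq> empty_forest" using assms fsize_fprod[of w] by (metis fsize_empty length_0_conv)
  then obtain q where q: "q \<in> Qdes (fprod w)" "\<forall>a\<in>#rho (fprod w). a \<le> q" "rho (fprod w) = add_mset q (rho (fdel (fprod w) q))"
    using peel[OF G] by blast
  obtain u where u: "fprod u = fdel (fprod w) q" using forest_fprod[OF is_forest_fdel[OF G]] by blast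
  have e: "fprod (u @ [q]) = fprod w" using u fmult_fdel[OF q(1)] by (simp add: fprod_snoc)
  show ?thesis using that[OF q u e length_fprod_eq[OF e]] .
qed

lemma claimA: "length w = size M \<Longrightarrow> c0 M w \<noteq> 0 \<Longrightarrow> dom (rho (fprod w)) M"
proof (induction "length w" arbitrary: w M rule: less_induct)
  case less
  show ?case
  proof (cases "w = []")
    case True
    then show ?thesis using less.prems by (simp add: dom_def cb_def)
  next
    case False
    obtain q u where q: "q \<in> Qdes (fprod w)" "\<forall>a\<in>#rho (fprod w). a \<le> q"
      and rG: "rho (fprod w) = add_mset q (rho (fdel (fprod w) q))" and u: "fprod u = fdel (fprod w) q"
      and e: "fprod (u @ [q]) = fprod w" and l: "length (u @ [q]) = length w"
      using peel_word[OF False] by blast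
    let ?R = "rho (fdel (fprod w) q)"
    have "c0 M w = c0 M (u @ [q])" using c0_indep[OF e[symmetric] less.prems(1)] .
    then have nz: "fst (Tm q M) * c0 (snd (Tm q M)) u \<noteq> 0" using less.prems(2) by (simp add: c0_snoc)
    then have cases: "(q \<in># M \<and> Suc q \<notin># M) \<or> (q \<notin># M \<and> Suc q \<in># M)" by (auto simp: Tm_def split: if_splits)
    let ?M1 = "snd (Tm q M)"
    have sM1: "size ?M1 = length u"
      using cases less.prems(1) l by (auto simp: Tm_def size_Diff_submset)
    have IH: "dom (rho (fprod u)) ?M1"
      by (rule less.hyps) (use l sM1 nz in auto)
    then have IH': "dom ?R ?M1" using u by simp
    have szR: "size ?R = length u"
      using arg_cong[OF rG, of size] size_rho[OF is_forest_fprod[of w]] fsize_fprod[of w] l by simp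
    have Rb: "\<forall>a\<in>#?R. a \<le> q" using q(2) rG by simp
    show ?thesis
      unfolding dom_def
    proof
      fix m
      show "cb m M \<le> cb m (rho (fprod w))"
      proof (cases "q < m")
        case True
        have "cb m ?R = size ?R" using Rb True by (intro cb_all) auto
        then have "cb m (rho (fprod w)) = size M" using rG True szR l less.prems(1) by (simp add: cb_add)
        then show ?thesis using cb_le_size[of m M] by simp
      next
        case False
        have "cb m ?M1 = cb m M"
        proof (cases "q \<in># M \<and> Suc q \<notin># M")
          case True
          then have M1: "?M1 = image_mset (dn (Suc q)) (M - {#q#})" by (simp add: Tm_def)
          have "cb m ?M1 = cb m (M - {#q#})"
            unfolding M1 by (rule cb_image_cong) (use False in \<open>auto simp: dn_def\<close>)
          also have "\<dots> = cb m M" using True False by (simp add: cb_diff)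
          finally show ?thesis .
        next
          case c2: False
          then have c2': "q \<notin># M \<and> Suc q \<in># M" using cases by blast
          then have M1: "?M1 = image_mset (dn q) (M - {#Suc q#})" by (simp add: Tm_def)
          have "cb m ?M1 = cb m (M - {#Suc q#})"
            unfolding M1 by (rule cb_image_cong) (use False in \<open>auto simp: dn_def\<close>)
          also have "\<dots> = cb m M" using c2' False by (simp add: cb_diff)
          finally show ?thesis .
        qed
        moreover have "cb m ?M1 \<le> cb m ?R" using IH' by (simp add: dom_def)
        moreover have "cb m (rho (fprod w)) = cb m ?R" using rG False by (simp add: cb_add)
        ultimately show ?thesis by simp
      qed
    qed
  qed
qed

lemma claimB: "is_forest F \<Longrightarrow> length w = fsize F \<Longrightarrow> rho (fprod w) = rho F \<Longrightarrow>
   c0 (rho F) w = (if fprod w = F then 1 else 0)"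
proof (induction "length w" arbitrary: w F rule: less_induct)
  case less
  show ?case
  proof (cases "w = []")
    case True
    then have "F = empty_forest" using less.prems fsize_0 by simp
    then show ?thesis using True by (simp add: c0_Nil)
  next
    case False
    obtain q u where q: "q \<in> Qdes (fprod w)" "\<forall>a\<in>#rho (fprod w). a \<le> q"
      and rG: "rho (fprod w) = add_mset q (rho (fdel (fprod w) q))" and u: "fprod u = fdel (fprod w) q"
      and e: "fprod (u @ [q]) = fprod w" and l: "length (u @ [q]) = length w"
      using peel_word[OF False] by blast
    have Fne: "F \<noteq> empty_forest" using less.prems(2) False by auto
    obtain q' where q': "q' \<in> Qdes F" "\<forall>a\<in>#rho F. a \<le> q'" and rF: "rho F = add_mset q' (rho (fdel F q'))"
      using peel[OF less.prems(1) Fne] by blast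
    have qq: "q' = q"
    proof -
      have "q \<in># rho F" using rG less.prems(3) by simp
      then have "q \<le> q'" using q'(2) by blast
      moreover have "q' \<in># rho (fprod w)" using rF less.prems(3) by simp
      then have "q' \<le> q" using q(2) by blast
      ultimately show ?thesis by simp
    qed
    let ?RF = "rho (fdel F q)"
    have RFb: "\<forall>a\<in>#?RF. a \<le> q" using q'(2) rF qq by simp
    have inF: "q \<in># rho F" and notF: "Suc q \<notin># rho F" using rF qq q'(2) by auto
    have "rho F - {#q#} = ?RF" using rF qq by simp
    then have Tq: "Tm q (rho F) = (1, ?RF)"
      using inF notF RFb by (auto simp: Tm_def dn_def intro!: image_mset_cong[where g=id, simplified])
    have sz: "size (rho F) = length w" using size_rho[OF less.prems(1)] less.prems(2) by simp
    have "c0 (rho F) w = c0 (rho F) (u @ [q])" using c0_indep[OF e[symmetric]] sz by simp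
    also have "\<dots> = c0 ?RF u" using Tq by (simp add: c0_snoc)
    also have "\<dots> = (if fprod u = fdel F q then 1 else 0)"
    proof (rule less.hyps)
      show "length u < length w" using l by simp
      show "is_forest (fdel F q)" by (rule is_forest_fdel[OF less.prems(1)])
      show "length u = fsize (fdel F q)"
        using fsize_fdel[OF less.prems(1) q'(1)] qq less.prems(2) l by simp
      show "rho (fprod u) = rho (fdel F q)"
        using u rG rF qq less.prems(3) by simp
    qed
    also have "\<dots> = (if fprod w = F then 1 else 0)"
    proof -
      have "fprod u = fdel F q \<longleftrightarrow> fprod w = F"
      proof
        assume "fprod u = fdel F q"
        then show "fprod w = F" using e fmult_fdel[OF q'(1)] qq by (simp add: fprod_snoc)
      next
        assume "fprod w = F" then show "fprod u = fdel F q" using u by simp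
      qed
      then show ?thesis by simp
    qed
    finally show ?thesis .
  qed
qed


definition Dual :: "forest \<Rightarrow> poly \<Rightarrow> bool" where
  "Dual F p \<longleftrightarrow> hom (fsize F) p \<and> (\<forall>w. coefB {} p w = (if fprod w = F then 1 else 0))"

lemma coefB_big: "hom k f \<Longrightarrow> k < length w \<Longrightarrow> coefB B f w = 0"
  using hom_coefB(2) by blast

lemma degle_coefB: assumes "degle d f" "d < length w" shows "coefB B f w = 0"
proof -
  let ?K = "mdeg ` Poly_Mapping.keys f"
  have "coefB B f w = (\<Sum>k\<in>?K. coefB B (hc k f) w)"
    by (subst hc_decomp) (simp add: coefB_sum)
  also have "\<dots> = 0"
  proof (rule sum.neutral, rule ballI)
    fix k assume "k \<in> ?K"
    then have "k \<le> d" using assms(1) by (auto simp: degle_def)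
    then show "coefB B (hc k f) w = 0" using coefB_big[OF hom_hc] assms(2) by simp
  qed
  finally show ?thesis .
qed

lemma finite_nonzero_coef:
  assumes "degle d f" "xb n f"
  shows "finite {F. is_forest F \<and> fcoef f F \<noteq> 0}"
proof -
  have "{F. is_forest F \<and> fcoef f F \<noteq> 0} \<subseteq> fprod ` {w. set w \<subseteq> {..<n} \<and> length w \<le> d}"
  proof
    fix F assume F: "F \<in> {F. is_forest F \<and> fcoef f F \<noteq> 0}"
    then obtain w where w: "fprod w = F" using forest_fprod by blast
    then have nz: "coefB {} f w \<noteq> 0" using F fcoef_fprod[of f w] by simp
    have "set w \<subseteq> {..<n}" using coefB_bound[OF assms(2) nz] by auto
    moreover have "length w \<le> d" using degle_coefB[OF assms(1)] nz by (meson not_le)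
    ultimately show "F \<in> fprod ` {w. set w \<subseteq> {..<n} \<and> length w \<le> d}" using w by blast
  qed
  moreover have "finite {w. set w \<subseteq> {..<n} \<and> length w \<le> d}" by (rule finite_lists_length_le) simp
  ultimately show ?thesis by (meson finite_imageI finite_subset)
qed

lemma sum_delta_forest: assumes "finite S" shows "(\<Sum>G\<in>S. c G * (if H = G then 1 else 0)) = (if H \<in> S then c H else (0::poly))"
proof -
  have "(\<Sum>G\<in>S. c G * (if H = G then 1 else 0)) = (\<Sum>G\<in>S. if H = G then c G else 0)" by (rule sum.cong) auto
  also have "\<dots> = (if H \<in> S then c H else 0)" using assms by (rule sum.delta')
  finally show ?thesis .
qed

lemma exists_step:
  assumes F: "is_forest F"
    and IH: "\<And>G. is_forest G \<Longrightarrow> (fsize G < fsize F \<or> (fsize G = fsize F \<and> sum_mset (rho G) < sum_mset (rho F))) \<Longrightarrow> \<exists>p. Dual G p"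
  shows "\<exists>p. Dual F p"
proof -
  let ?n = "fsize F" and ?M = "rho F"
  let ?x = "mono ?M"
  define lower where "lower G \<longleftrightarrow> is_forest G \<and> (fsize G < ?n \<or> (fsize G = ?n \<and> sum_mset (rho G) < sum_mset ?M))" for G
  define pp where "pp G = (SOME p. Dual G p)" for G
  have pp: "lower G \<Longrightarrow> Dual G (pp G)" for G
    unfolding pp_def lower_def by (rule someI_ex) (use IH in auto)
  define S where "S = {G. lower G \<and> fcoef ?x G \<noteq> 0}"
  have hx: "hom ?n ?x" using hom_mono[of ?M] size_rho[OF F] by simp
  obtain nb where nb: "xb nb ?x" using xb_exists by blast
  have finS: "finite S"
  proof -
    have "finite {G. is_forest G \<and> fcoef ?x G \<noteq> 0}"
      by (rule finite_nonzero_coef[OF degle_hom[OF hx order.refl] nb])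
    moreover have "S \<subseteq> {G. is_forest G \<and> fcoef ?x G \<noteq> 0}" by (auto simp: S_def lower_def)
    ultimately show ?thesis by (rule finite_subset[rotated])
  qed
  define p where "p = ?x - (\<Sum>G\<in>S. fcoef ?x G * pp G)"
  have homp: "hom ?n p"
    unfolding p_def
  proof (rule hom_diff[OF hx], rule hom_sum)
    fix G assume G: "G \<in> S"
    then have lG: "lower G" by (simp add: S_def)
    then obtain w where w: "fprod w = G" using forest_fprod by (auto simp: lower_def)
    have le: "fsize G \<le> ?n" using lG by (auto simp: lower_def)
    have "hom (?n - length w) (fcoef ?x G)" using hom_coefB(1)[OF hx, of w "{}"] w fcoef_fprod by metis
    then have "hom (?n - fsize G) (fcoef ?x G)" using w fsize_fprod by metis
    moreover have "hom (fsize G) (pp G)" using pp[OF lG] by (simp add: Dual_def)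
    ultimately show "hom ?n (fcoef ?x G * pp G)" using hom_mult le by fastforce
  qed
  have coefp: "coefB {} p w = (if fprod w = F then 1 else 0)" for w
  proof -
    let ?H = "fprod w"
    have "coefB {} p w = coefB {} ?x w - (\<Sum>G\<in>S. fcoef ?x G * coefB {} (pp G) w)"
      unfolding p_def using finS by (simp add: coefB_diff coefB_sum coefB_scalar fcoef_def xb_coefB)
    also have "\<dots> = coefB {} ?x w - (\<Sum>G\<in>S. fcoef ?x G * (if ?H = G then 1 else 0))"
      using pp by (intro arg_cong2[where f=minus] sum.cong refl) (auto simp: S_def Dual_def)
    also have "\<dots> = fcoef ?x ?H - (if ?H \<in> S then fcoef ?x ?H else 0)"
      using finS by (simp add: sum_delta_forest fcoef_fprod)
    also have "\<dots> = (if fprod w = F then 1 else 0)"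
    proof (cases "?H \<in> S")
      case True
      then have "?H \<noteq> F" by (auto simp: S_def lower_def)
      then show ?thesis using True by simp
    next
      case nS: False
      show ?thesis
      proof (cases "?H = F")
        case True
        have lw: "length w = size ?M" using True fsize_fprod[of w] size_rho[OF F] by simp
        have "fcoef ?x ?H = pconst (c0 ?M w)" using coefB_mono[OF lw] fcoef_fprod by metis
        also have "c0 ?M w = 1" using claimB[OF F, of w] True fsize_fprod[of w] by simp
        finally show ?thesis using True nS by (simp add: pconst_1)
      next
        case HF: False
        have "fcoef ?x ?H = 0"
        proof (rule ccontr)
          assume nz: "fcoef ?x ?H \<noteq> 0"
          then have nl: "\<not> lower ?H" using nS by (simp add: S_def)
          have nz': "coefB {} ?x w \<noteq> 0" using nz fcoef_fprod by metis
          have "\<not> ?n < length w" using coefB_big[OF hx] nz' by blast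
          moreover have "\<not> length w < ?n"
            using nl fsize_fprod[of w] is_forest_fprod[of w] by (auto simp: lower_def)
          ultimately have lw: "length w = size ?M" using size_rho[OF F] by simp
          have c: "coefB {} ?x w = pconst (c0 ?M w)" by (rule coefB_mono[OF lw])
          then have "c0 ?M w \<noteq> 0" using nz' by (auto simp: pconst_0)
          then have d: "dom (rho ?H) ?M" by (rule claimA[OF lw])
          have sz: "size (rho ?H) = size ?M" using size_rho[OF is_forest_fprod[of w]] fsize_fprod[of w] lw by simp
          have "sum_mset (rho ?H) \<le> sum_mset ?M \<and> (sum_mset (rho ?H) = sum_mset ?M \<longrightarrow> rho ?H = ?M)"
            by (rule dom_mu[OF sz d])
          moreover have "\<not> sum_mset (rho ?H) < sum_mset ?M"
            using nl lw size_rho[OF F] fsize_fprod[of w] is_forest_fprod[of w] by (auto simp: lower_def)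
          ultimately have "rho ?H = ?M" by simp
          then have "c0 ?M w = 0" using claimB[OF F, of w] HF lw size_rho[OF F] by simp
          then show False using \<open>c0 ?M w \<noteq> 0\<close> by simp
        qed
        then show ?thesis using HF nS by simp
      qed
    qed
    finally show ?thesis .
  qed
  show ?thesis using homp coefp by (auto simp: Dual_def)
qed

lemma exists_dual: "is_forest F \<Longrightarrow> \<exists>p. Dual F p"
proof (induction "fsize F" arbitrary: F rule: less_induct)
  case less
  note outer = less.hyps
  have inner: "\<forall>G. is_forest G \<longrightarrow> fsize G = fsize F \<longrightarrow> sum_mset (rho G) = s \<longrightarrow> (\<exists>p. Dual G p)" for s
  proof (induction s rule: less_induct)
    case (less s)
    show ?case
    proof (intro allI impI)
      fix G assume G: "is_forest G" "fsize G = fsize F" "sum_mset (rho G) = s"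
      show "\<exists>p. Dual G p"
      proof (rule exists_step[OF G(1)])
        fix H assume H: "is_forest H" "fsize H < fsize G \<or> (fsize H = fsize G \<and> sum_mset (rho H) < sum_mset (rho G))"
        show "\<exists>p. Dual H p"
        proof (cases "fsize H < fsize G")
          case True then show ?thesis using outer[of H] H(1) G(2) by simp
        next
          case False
          then have "fsize H = fsize F" "sum_mset (rho H) < s" using H(2) G by auto
          then show ?thesis using less.IH[of "sum_mset (rho H)"] H(1) by blast
        qed
      qed
    qed
  qed
  then show ?case using less.prems by blast
qed


definition Pf :: "forest \<Rightarrow> poly" where
  "Pf F = (if is_forest F then (SOME p. Dual F p) else 0)"

lemma Pf_Dual: "is_forest F \<Longrightarrow> Dual F (Pf F)"
  unfolding Pf_def using exists_dual by (simp add: someI_ex)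

lemma Pf_family: "dfp_family Pf"
proof (rule dual_family)
  fix F w assume "is_forest F"
  then show "coefB {} (Pf F) w = (if fprod w = F then 1 else 0)" using Pf_Dual by (simp add: Dual_def)
next
  fix F assume "is_forest F"
  then show "hom (fsize F) (Pf F)" using Pf_Dual by (simp add: Dual_def)
next
  fix F assume "\<not> is_forest F"
  then show "Pf F = 0" by (simp add: Pf_def)
qed

lemma dfp_eq: "dfp = Pf"
  unfolding dfp_def using Pf_family family_unique by blast

theorem theorem10p10:
  fixes f :: poly
  shows "\<exists>a :: forest \<Rightarrow> poly.
           finite {F. is_forest F \<and> a F \<noteq> 0} \<and>
           (\<forall>is. a (fprod is) = coef f is) \<and>
           f = (\<Sum>F\<in>{F. is_forest F \<and> a F \<noteq> 0}. a F * dfp F)"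
proof -
  define a where "a F = (if is_forest F then fcoef f F else 0)" for F
  let ?S = "{F. is_forest F \<and> a F \<noteq> 0}"
  obtain d where d: "degle d f" using degle_exists by blast
  obtain n where n: "xb n f" using xb_exists by blast
  have fin: "finite ?S"
  proof -
    have "?S = {F. is_forest F \<and> fcoef f F \<noteq> 0}" by (auto simp: a_def)
    then show ?thesis using finite_nonzero_coef[OF d n] by simp
  qed
  have af: "a (fprod w) = coef f w" for w
    by (simp add: a_def is_forest_fprod fcoef_fprod coef_coefB)
  have xa: "xb 0 (a F)" for F by (simp add: a_def fcoef_def xb_coefB)
  have "f - (\<Sum>F\<in>?S. a F * dfp F) = 0"
  proof (rule coefB_inj[of "{}"])
    fix w
    have "coefB {} (\<Sum>F\<in>?S. a F * dfp F) w = (\<Sum>F\<in>?S. a F * (if fprod w = F then 1 else 0))"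
      using fin by (simp add: coefB_sum coefB_scalar[OF xa] dfp_eq) (intro sum.cong refl, auto simp: Pf_Dual[unfolded Dual_def])
    also have "\<dots> = (if fprod w \<in> ?S then a (fprod w) else 0)" using fin by (rule sum_delta_forest)
    also have "\<dots> = coefB {} f w" using af[of w] is_forest_fprod[of w] by (auto simp: coef_coefB)
    finally show "coefB {} (f - (\<Sum>F\<in>?S. a F * dfp F)) w = 0" by (simp add: coefB_diff)
  qed
  then have "f = (\<Sum>F\<in>?S. a F * dfp F)" by simp
  then show ?thesis using fin af by blast
qed


end
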